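(* Let $p$ be an odd prime, $\zeta$ a primitive $p$-th root of unity, $K=\mathbf{Q}_p(\zeta)$, $\mathfrak{o}=\mathbf{Z}_p[\zeta]$, and regard $\mathbf{Z}[\zeta]\subset\mathfrak{o}$ via the embedding $\mathbf{Q}(\zeta)\hookrightarrow K$ sending $\zeta$ to $\zeta$. If a global unit $u\in\mathbf{Z}[\zeta]^\times$ satisfies $u\equiv a\pmod{p\mathfrak{o}}$ for some $a\in\mathbf{Z}_p^\times$, then $u$ is a $p$-th power in $\mathfrak{o}^\times$. *)

theory Defs
  imports Complex_Main "HOL-Computational_Algebra.Polynomial"
begin

definition zeta :: "nat \<Rightarrow> complex" where
  "zeta p = cis (2 * pi / real p)"

definition Zz :: "nat \<Rightarrow> complex set" where
  "Zz p = {poly (map_poly of_int f) (zeta p) | f :: int poly. True}"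

definition congZ :: "nat \<Rightarrow> int \<Rightarrow> complex \<Rightarrow> complex \<Rightarrow> bool" where
  "congZ p m x y \<longleftrightarrow> (\<exists>w\<in>Zz p. x - y = of_int m * w)"

definition global_unit :: "nat \<Rightarrow> complex \<Rightarrow> bool" where
  "global_unit p u \<longleftrightarrow> u \<in> Zz p \<and> (\<exists>v\<in>Zz p. u * v = 1)"

(* The completion o = Z_p[zeta] = lim_n Z[zeta]/p^n Z[zeta], elements represented by
   compatible sequences w with w n taken modulo p^n. *)
definition o_elem :: "nat \<Rightarrow> (nat \<Rightarrow> complex) \<Rightarrow> bool" where
  "o_elem p w \<longleftrightarrow> (\<forall>n. w n \<in> Zz p) \<and> (\<forall>n. congZ p (int p ^ n) (w (Suc n)) (w n))"

definition o_eq :: "nat \<Rightarrow> (nat \<Rightarrow> complex) \<Rightarrow> (nat \<Rightarrow> complex) \<Rightarrow> bool" where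
  "o_eq p v w \<longleftrightarrow> (\<forall>n. congZ p (int p ^ n) (v n) (w n))"

definition o_unit :: "nat \<Rightarrow> (nat \<Rightarrow> complex) \<Rightarrow> bool" where
  "o_unit p w \<longleftrightarrow> (\<exists>v. o_elem p v \<and> o_eq p (\<lambda>n. w n * v n) (\<lambda>n. 1))"

(* Z_p = lim_n Z/p^n Z, elements as compatible integer sequences *)
definition Zp_elem :: "nat \<Rightarrow> (nat \<Rightarrow> int) \<Rightarrow> bool" where
  "Zp_elem p a \<longleftrightarrow> (\<forall>n. (int p ^ n) dvd (a (Suc n) - a n))"

definition Zp_unit :: "nat \<Rightarrow> (nat \<Rightarrow> int) \<Rightarrow> bool" where
  "Zp_unit p a \<longleftrightarrow> (\<exists>b. Zp_elem p b \<and> (\<forall>n. (int p ^ n) dvd (a n * b n - 1)))"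

end

theory Submission
  imports Defs "HOL-Computational_Algebra.Polynomial_Factorial" "HOL-Number_Theory.Cong"
begin

definition ipoly :: "int poly \<Rightarrow> complex \<Rightarrow> complex" where
  "ipoly f w = poly (map_poly of_int f) w"

lemma map_poly_of_int_add: "map_poly (of_int :: int \<Rightarrow> 'a::ring_1) (f + g) = map_poly of_int f + map_poly of_int g"
  by (intro poly_eqI) (simp add: coeff_map_poly)

lemma map_poly_of_int_diff: "map_poly (of_int :: int \<Rightarrow> 'a::ring_1) (f - g) = map_poly of_int f - map_poly of_int g"
  by (intro poly_eqI) (simp add: coeff_map_poly)

lemma map_poly_of_int_mult: "map_poly (of_int :: int \<Rightarrow> 'a::comm_ring_1) (f * g) = map_poly of_int f * map_poly of_int g"
  by (intro poly_eqI) (simp add: coeff_map_poly coeff_mult)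

lemma ipoly_add [simp]: "ipoly (f + g) w = ipoly f w + ipoly g w"
  by (simp add: ipoly_def map_poly_of_int_add)
lemma ipoly_diff [simp]: "ipoly (f - g) w = ipoly f w - ipoly g w"
  by (simp add: ipoly_def map_poly_of_int_diff)
lemma ipoly_mult [simp]: "ipoly (f * g) w = ipoly f w * ipoly g w"
  by (simp add: ipoly_def map_poly_of_int_mult)
lemma ipoly_const [simp]: "ipoly [:c:] w = of_int c"
  by (simp add: ipoly_def map_poly_pCons)
lemma ipoly_0 [simp]: "ipoly 0 w = 0"
  by (simp add: ipoly_def)
lemma ipoly_1 [simp]: "ipoly 1 w = 1"
  by (simp add: ipoly_def)
lemma ipoly_of_int [simp]: "ipoly (of_int c) w = of_int c"
  by (simp add: of_int_poly)
lemma ipoly_of_nat [simp]: "ipoly (of_nat c) w = of_nat c"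
  using ipoly_of_int[of "int c" w] by simp
lemma ipoly_pCons [simp]: "ipoly (pCons a f) w = of_int a + w * ipoly f w"
  by (simp add: ipoly_def map_poly_pCons)
lemma ipoly_power [simp]: "ipoly (f ^ n) w = ipoly f w ^ n"
  by (induction n) auto
lemma ipoly_prod: "ipoly (\<Prod>i\<in>A. F i) w = (\<Prod>i\<in>A. ipoly (F i) w)"
  by (induction A rule: infinite_finite_induct) auto
lemma ipoly_sum: "ipoly (\<Sum>i\<in>A. F i) w = (\<Sum>i\<in>A. ipoly (F i) w)"
  by (induction A rule: infinite_finite_induct) auto
lemma ipoly_monom [simp]: "ipoly (monom c n) w = of_int c * w ^ n"
  by (simp add: ipoly_def map_poly_monom poly_monom)
lemma ipoly_smult [simp]: "ipoly (smult c f) w = of_int c * ipoly f w"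
  by (simp add: ipoly_def map_poly_smult)
lemma ipoly_pcompose: "ipoly (pcompose f g) w = ipoly f (ipoly g w)"
  by (induction f) (auto simp: pcompose_pCons)
lemma ipoly_cnj: "cnj (ipoly f w) = ipoly f (cnj w)"
  by (induction f) auto
lemma ipoly_minus [simp]: "ipoly (- f) w = - ipoly f w"
  using ipoly_diff[of 0 f w] by simp


locale cyc =
  fixes p :: nat
  assumes pr: "prime p" and od: "odd p"
begin

abbreviation z where "z \<equiv> zeta p"
abbreviation ZZ where "ZZ \<equiv> Zz p"

lemma p_ge3: "p \<ge> 3"
proof -
  have "p \<ge> 2" using pr prime_ge_2_nat by blast
  moreover have "p \<noteq> 2" using od by auto
  ultimately show ?thesis by linarith
qed

lemma p_pos: "p > 0" using p_ge3 by simp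

lemma z_pow: "z ^ k = cis (2 * pi * real k / real p)"
  by (simp add: zeta_def DeMoivre mult_ac)

lemma z_pow_p: "z ^ p = 1"
proof -
  have "z ^ p = cis (2 * pi)" using p_pos by (simp add: z_pow)
  also have "\<dots> = 1" by (simp add: complex_eq_iff)
  finally show ?thesis .
qed

lemma z_pow_mod: "z ^ k = z ^ (k mod p)"
proof -
  have "z ^ k = z ^ (p * (k div p) + k mod p)" by simp
  also have "\<dots> = (z ^ p) ^ (k div p) * z ^ (k mod p)" by (simp only: power_add power_mult)
  also have "\<dots> = z ^ (k mod p)" by (simp add: z_pow_p)
  finally show ?thesis .
qed

lemma z_inj: "i < p \<Longrightarrow> j < p \<Longrightarrow> z ^ i = z ^ j \<Longrightarrow> i = j"
  using bij_betw_roots_unity[OF p_pos] unfolding bij_betw_def inj_on_def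
  by (auto simp: z_pow)

lemma z_pow_eq_iff: "z ^ i = z ^ j \<longleftrightarrow> i mod p = j mod p"
proof
  assume "z ^ i = z ^ j"
  hence "z ^ (i mod p) = z ^ (j mod p)" using z_pow_mod by metis
  thus "i mod p = j mod p" using z_inj p_pos by auto
next
  assume "i mod p = j mod p"
  thus "z ^ i = z ^ j" using z_pow_mod by metis
qed

lemma z_pow_eq_1: "z ^ k = 1 \<longleftrightarrow> p dvd k"
  using z_pow_eq_iff[of k 0] by (simp add: dvd_eq_mod_eq_0)

lemma z_ne1: "z \<noteq> 1" using z_pow_eq_1[of 1] p_ge3 by auto

lemma z_ne0: "z \<noteq> 0" by (simp add: zeta_def)

lemma norm_z_pow [simp]: "norm (z ^ k) = 1"
  by (simp add: z_pow)

lemma cnj_z_pow: "cnj (z ^ k) = z ^ ((p - 1) * k)"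
proof -
  have "z ^ k * z ^ ((p - 1) * k) = z ^ (p * k)"
    using p_pos by (simp add: power_add[symmetric] algebra_simps)
  also have "\<dots> = 1" by (simp add: power_mult z_pow_p)
  finally have 1: "z ^ k * z ^ ((p - 1) * k) = 1" .
  have 2: "z ^ k * cnj (z ^ k) = 1"
    using complex_norm_square[of "z^k"] by simp
  from 1 2 show ?thesis
    by (metis mult_cancel_left2 mult.commute mult.left_commute)
qed

lemma geom_z: "\<not> p dvd k \<Longrightarrow> (\<Sum>j<p. z ^ (k * j)) = 0"
proof -
  assume "\<not> p dvd k"
  hence ne: "z ^ k \<noteq> 1" using z_pow_eq_1 by simp
  have "(\<Sum>j<p. z ^ (k * j)) = (\<Sum>j<p. (z ^ k) ^ j)" by (simp add: power_mult)
  also have "\<dots> = ((z ^ k) ^ p - 1) / (z ^ k - 1)" using ne by (simp add: geometric_sum)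
  also have "(z ^ k) ^ p = 1" by (simp add: power_mult[symmetric] mult.commute[of k] power_mult z_pow_p)
  finally show ?thesis by simp
qed

lemma R_sum: "(\<Sum>j\<in>{1..<p}. z ^ (j * m)) = (if p dvd m then of_nat p - 1 else -1)"
proof -
  have split: "(\<Sum>j<p. z ^ (j * m)) = 1 + (\<Sum>j\<in>{1..<p}. z ^ (j * m))"
  proof -
    have "{..<p} = insert 0 {1..<p}" using p_pos by auto
    thus ?thesis by simp
  qed
  show ?thesis
  proof (cases "p dvd m")
    case True
    then obtain c where "m = p * c" by auto
    hence "\<And>j. z ^ (j * m) = 1" by (simp add: z_pow_eq_1)
    thus ?thesis using True p_pos by simp
  next
    case False
    with geom_z[of m] split have "1 + (\<Sum>j\<in>{1..<p}. z ^ (j * m)) = 0" by (simp add: mult.commute)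
    thus ?thesis using False by (simp add: eq_neg_iff_add_eq_0 add.commute)
  qed
qed

lemma ZZ_iff: "x \<in> ZZ \<longleftrightarrow> (\<exists>f. x = ipoly f z)"
  by (simp add: Zz_def ipoly_def)

lemma ZZ_ipoly [simp, intro]: "ipoly f z \<in> ZZ"
  using ZZ_iff by blast

lemma ZZ_add [intro]: "x \<in> ZZ \<Longrightarrow> y \<in> ZZ \<Longrightarrow> x + y \<in> ZZ"
  by (metis ZZ_iff ipoly_add)
lemma ZZ_diff [intro]: "x \<in> ZZ \<Longrightarrow> y \<in> ZZ \<Longrightarrow> x - y \<in> ZZ"
  by (metis ZZ_iff ipoly_diff)
lemma ZZ_mult [intro]: "x \<in> ZZ \<Longrightarrow> y \<in> ZZ \<Longrightarrow> x * y \<in> ZZ"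
  by (metis ZZ_iff ipoly_mult)
lemma ZZ_minus [intro]: "x \<in> ZZ \<Longrightarrow> - x \<in> ZZ"
  by (metis ZZ_iff ipoly_minus)
lemma ZZ_of_int [simp, intro]: "of_int n \<in> ZZ"
  by (metis ZZ_ipoly ipoly_const)
lemma ZZ_of_nat [simp, intro]: "of_nat n \<in> ZZ"
  by (metis ZZ_of_int of_int_of_nat_eq)
lemma ZZ_0 [simp, intro]: "0 \<in> ZZ" using ZZ_of_int[of 0] by simp
lemma ZZ_1 [simp, intro]: "1 \<in> ZZ" using ZZ_of_int[of 1] by simp
lemma ZZ_power [intro]: "x \<in> ZZ \<Longrightarrow> x ^ n \<in> ZZ"
  by (induction n) auto
lemma ZZ_z [simp, intro]: "z \<in> ZZ"
  using ZZ_ipoly[of "monom 1 1"] by simp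
lemma ZZ_zpow [simp, intro]: "z ^ n \<in> ZZ"
  using ZZ_power ZZ_z by blast
lemma ZZ_sum [intro]: "(\<And>i. i \<in> A \<Longrightarrow> F i \<in> ZZ) \<Longrightarrow> sum F A \<in> ZZ"
  by (induction A rule: infinite_finite_induct) auto
lemma ZZ_prod [intro]: "(\<And>i. i \<in> A \<Longrightarrow> F i \<in> ZZ) \<Longrightarrow> prod F A \<in> ZZ"
  by (induction A rule: infinite_finite_induct) auto
lemma ZZ_ipoly_at: "w \<in> ZZ \<Longrightarrow> ipoly f w \<in> ZZ"
  by (induction f) auto
lemma ZZ_cnj [intro]: "x \<in> ZZ \<Longrightarrow> cnj x \<in> ZZ"
proof -
  assume "x \<in> ZZ"
  then obtain f where "x = ipoly f z" using ZZ_iff by blast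
  hence "cnj x = ipoly f (z ^ (p - 1))" using ipoly_cnj cnj_z_pow[of 1] by simp
  thus ?thesis using ZZ_ipoly_at by simp
qed

end

lemma pcompose_monom1: "pcompose (monom 1 n) q = q ^ n"
  by (induction n) (auto simp: monom_Suc pcompose_pCons monom_0 one_pCons)

lemma geom_poly: "(\<Sum>k<n. monom (1::int) k) * [:-1, 1:] = monom 1 n - 1"
proof (induction n)
  case 0 thus ?case by simp
next
  case (Suc n)
  have m: "monom (1::int) n * [:-1, 1:] = monom 1 (Suc n) - monom 1 n"
  proof -
    have "[:-1, 1:] = monom (1::int) 1 - 1" by (simp add: monom_Suc monom_0 one_pCons)
    thus ?thesis by (simp add: algebra_simps mult_monom monom_Suc)
  qed
  have "(\<Sum>k<Suc n. monom (1::int) k) * [:-1, 1:] = (\<Sum>k<n. monom 1 k) * [:-1, 1:] + monom 1 n * [:-1, 1:]"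
    by (simp add: distrib_right)
  also have "\<dots> = (monom 1 n - 1) + (monom 1 (Suc n) - monom 1 n)" by (simp only: Suc m)
  also have "\<dots> = monom 1 (Suc n) - 1" by (simp add: algebra_simps)
  finally show ?case .
qed

lemma eisenstein_aux:
  fixes F G H :: "int poly" and q :: int
  assumes q: "prime q" and FGH: "F = G * H"
    and G0: "q dvd coeff G 0" and H0: "\<not> q dvd coeff H 0"
    and low: "\<And>k. k < degree F \<Longrightarrow> q dvd coeff F k"
    and lead: "\<not> q dvd lead_coeff F"
    and dH: "degree H \<ge> 1"
  shows False
proof -
  have Gnz: "G \<noteq> 0" and Hnz: "H \<noteq> 0" using lead FGH by auto
  have "lead_coeff F = lead_coeff G * lead_coeff H" using FGH by (simp add: lead_coeff_mult)
  hence "\<not> q dvd lead_coeff G" using lead by auto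
  hence ex: "\<exists>i. \<not> q dvd coeff G i" by blast
  define i where "i = (LEAST i. \<not> q dvd coeff G i)"
  have Gi: "\<not> q dvd coeff G i" unfolding i_def by (rule LeastI_ex[OF ex])
  have below: "\<And>k. k < i \<Longrightarrow> q dvd coeff G k" unfolding i_def using not_less_Least by blast
  have "i \<le> degree G"
  proof (rule ccontr)
    assume "\<not> i \<le> degree G"
    hence "coeff G i = 0" by (simp add: coeff_eq_0)
    thus False using Gi by simp
  qed
  moreover have "degree F = degree G + degree H" using FGH Gnz Hnz by (simp add: degree_mult_eq)
  ultimately have "i < degree F" using dH by linarith
  hence "q dvd coeff F i" by (rule low)
  moreover have "coeff F i = coeff G i * coeff H 0 + (\<Sum>k<i. coeff G k * coeff H (i - k))"
  proof -
    have "{..i} = insert i {..<i}" by auto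
    thus ?thesis using FGH by (simp add: coeff_mult)
  qed
  moreover have "q dvd (\<Sum>k<i. coeff G k * coeff H (i - k))"
    by (intro dvd_sum) (simp add: below)
  ultimately have "q dvd coeff F i - (\<Sum>k<i. coeff G k * coeff H (i - k))"
    by (intro dvd_diff)
  hence "q dvd coeff G i * coeff H 0" using \<open>coeff F i = _\<close> by simp
  thus False using q Gi H0 by (simp add: prime_dvd_mult_iff)
qed

lemma eisenstein:
  fixes F G H :: "int poly" and q :: int
  assumes q: "prime q" and FGH: "F = G * H"
    and c0: "coeff F 0 = q"
    and low: "\<And>k. k < degree F \<Longrightarrow> q dvd coeff F k"
    and lead: "\<not> q dvd lead_coeff F"
    and dG: "degree G \<ge> 1" and dH: "degree H \<ge> 1"
  shows False
proof -
  have prod: "coeff G 0 * coeff H 0 = q" using FGH c0 by (simp add: coeff_mult_0)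
  hence "q dvd coeff G 0 * coeff H 0" by simp
  hence "q dvd coeff G 0 \<or> q dvd coeff H 0" using q by (simp add: prime_dvd_mult_iff)
  moreover have "\<not> (q dvd coeff G 0 \<and> q dvd coeff H 0)"
  proof
    assume "q dvd coeff G 0 \<and> q dvd coeff H 0"
    hence "q * q dvd coeff G 0 * coeff H 0" by (intro mult_dvd_mono) auto
    hence "q * q dvd q * 1" using prod by simp
    moreover have "q \<noteq> 0" using q by auto
    ultimately have "q dvd 1" by (subst (asm) dvd_times_left_cancel_iff) auto
    thus False using q not_prime_unit by blast
  qed
  ultimately show False
  proof (elim disjE)
    assume "q dvd coeff G 0"
    moreover have "\<not> q dvd coeff H 0" using \<open>q dvd coeff G 0\<close> \<open>\<not> (_ \<and> _)\<close> by blast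
    ultimately show False using eisenstein_aux[OF q FGH _ _ low lead dH] by blast
  next
    assume "q dvd coeff H 0"
    moreover have "\<not> q dvd coeff G 0" using \<open>q dvd coeff H 0\<close> \<open>\<not> (_ \<and> _)\<close> by blast
    moreover have "F = H * G" using FGH by (simp add: mult.commute)
    ultimately show False using eisenstein_aux[OF q _ _ _ low lead dG] by blast
  qed
qed

context cyc
begin

definition Phi :: "int poly" where "Phi = (\<Sum>k<p. monom 1 k)"

lemma coeff_Phi: "coeff Phi k = (if k < p then 1 else 0)"
  by (simp add: Phi_def coeff_sum)

lemma degree_Phi: "degree Phi = p - 1"
proof (rule antisym)
  show "degree Phi \<le> p - 1" by (rule degree_le) (use p_pos in \<open>auto simp: coeff_Phi\<close>)
  show "p - 1 \<le> degree Phi" by (rule le_degree) (simp add: coeff_Phi p_pos)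
qed

lemma lead_Phi: "lead_coeff Phi = 1"
  by (simp add: degree_Phi coeff_Phi p_pos)

lemma Phi_nz: "Phi \<noteq> 0" using lead_Phi by auto

lemma ipoly_Phi: "ipoly Phi w = (\<Sum>k<p. w ^ k)"
  by (simp add: Phi_def ipoly_sum)

lemma ipoly_Phi_z: "\<not> p dvd j \<Longrightarrow> ipoly Phi (z ^ j) = 0"
  using geom_z[of j] by (simp add: ipoly_Phi power_mult)

definition Psi :: "int poly" where "Psi = pcompose Phi [:1, 1:]"

lemma Psi_x: "Psi * [:0, 1:] = [:1, 1:] ^ p - 1"
proof -
  have "pcompose (Phi * [:-1, 1:]) [:1, 1:] = pcompose (monom 1 p - 1) [:1, 1:]"
    using geom_poly[of p] by (simp add: Phi_def)
  moreover have "pcompose (Phi * [:-1, 1:]) [:1, 1:] = Psi * pcompose [:-1, 1:] [:1, 1:]"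
    by (simp only: Psi_def pcompose_mult)
  moreover have "pcompose [:-1, 1:] [:1, 1:] = ([:0, 1:] :: int poly)"
    by (simp add: pcompose_pCons)
  moreover have "pcompose (monom 1 p - 1) [:1, 1:] = [:1, 1:] ^ p - (1::int poly)"
    by (simp add: pcompose_diff pcompose_monom1 pcompose_1)
  ultimately show ?thesis by simp
qed

lemma coeff_Psi: "coeff Psi k = int (p choose (Suc k))"
proof -
  have "coeff Psi k = coeff (Psi * [:0, 1:]) (Suc k)"
    by (simp add: mult.commute[of Psi])
  also have "\<dots> = coeff ([:1, 1:] ^ p - 1 :: int poly) (Suc k)" by (simp only: Psi_x)
  also have "coeff ([:1, 1:] ^ p - 1 :: int poly) (Suc k) = int (p choose (Suc k))"
  proof (cases "Suc k \<le> p")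
    case True thus ?thesis by (simp add: coeff_linear_poly_power)
  next
    case False
    hence "coeff ([:1, 1:] ^ p :: int poly) (Suc k) = 0"
      by (intro coeff_eq_0) (simp add: degree_linear_power)
    thus ?thesis using False by simp
  qed
  finally show ?thesis .
qed

lemma degree_Psi: "degree Psi = p - 1"
  by (simp add: Psi_def degree_pcompose degree_Phi)

lemma Phi_irreducible: "irreducible Phi"
proof (rule irreducibleI)
  show "Phi \<noteq> 0" by (rule Phi_nz)
  show "\<not> is_unit Phi"
  proof
    assume "is_unit Phi"
    then obtain c where "Phi = [:c:]" using is_unit_poly_iff by blast
    hence "degree Phi = 0" by simp
    thus False using degree_Phi p_ge3 by simp
  qed
  fix a b assume ab: "Phi = a * b"
  hence anz: "a \<noteq> 0" and bnz: "b \<noteq> 0" using Phi_nz by auto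
  have lab: "lead_coeff a * lead_coeff b = 1" using ab lead_Phi by (simp add: lead_coeff_mult)
  show "is_unit a \<or> is_unit b"
  proof (cases "degree a = 0")
    case True
    then obtain c where "a = [:c:]" by (metis degree_eq_zeroE)
    moreover have "c dvd 1"
    proof -
      have "1 = c * lead_coeff b" using lab \<open>a = [:c:]\<close> by simp
      thus ?thesis by (rule dvdI)
    qed
    ultimately show ?thesis using is_unit_poly_iff by blast
  next
    case da: False
    show ?thesis
    proof (cases "degree b = 0")
      case True
      then obtain c where "b = [:c:]" by (metis degree_eq_zeroE)
      moreover have "c dvd 1"
      proof -
        have "1 = c * lead_coeff a" using lab \<open>b = [:c:]\<close> by (simp add: mult.commute)
        thus ?thesis by (rule dvdI)
      qed
      ultimately show ?thesis using is_unit_poly_iff by blast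
    next
      case db: False
      have PsiAB: "Psi = pcompose a [:1,1:] * pcompose b [:1,1:]"
        by (simp add: Psi_def ab pcompose_mult)
      have q: "prime (int p)" using pr by simp
      have "False"
      proof (rule eisenstein[OF q PsiAB])
        show "coeff Psi 0 = int p" by (simp add: coeff_Psi)
        show "int p dvd coeff Psi k" if "k < degree Psi" for k
        proof -
          have "Suc k < p" using that degree_Psi by simp
          hence "p dvd (p choose Suc k)" using dvd_choose_prime pr p_pos by auto
          thus ?thesis by (simp add: coeff_Psi)
        qed
        show "\<not> int p dvd lead_coeff Psi"
          using p_ge3 by (simp add: degree_Psi coeff_Psi)
        show "degree (pcompose a [:1,1:]) \<ge> 1" using da by (simp add: degree_pcompose)
        show "degree (pcompose b [:1,1:]) \<ge> 1" using db by (simp add: degree_pcompose)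
      qed
      thus ?thesis ..
    qed
  qed
qed

end

lemma dvd_from_smult:
  fixes g f q :: "int poly"
  assumes c: "content g = 1" and a: "a \<noteq> 0" and e: "smult a f = g * q"
  shows "g dvd f"
proof -
  have "fract_poly (smult a f) = fract_poly (g * q)" using e by simp
  hence "smult (to_fract a) (fract_poly f) = fract_poly g * fract_poly q" by simp
  hence "smult (inverse (to_fract a)) (smult (to_fract a) (fract_poly f)) =
         smult (inverse (to_fract a)) (fract_poly g * fract_poly q)" by simp
  hence "fract_poly f = fract_poly g * smult (inverse (to_fract a)) (fract_poly q)"
    using a by simp
  hence "fract_poly g dvd fract_poly f" by (rule dvdI)
  thus ?thesis using c by (rule fract_poly_dvdD)
qed

context cyc
begin

lemma ipoly_Phi_z1: "ipoly Phi z = 0"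
  using ipoly_Phi_z[of 1] p_ge3 by simp

lemma content_Phi: "content Phi = 1"
proof -
  have "content Phi dvd coeff Phi 0" by simp
  hence "is_unit (content Phi)" by (simp add: coeff_Phi p_pos)
  hence "normalize (content Phi) = 1" by (simp add: is_unit_normalize)
  thus ?thesis by (metis normalize_content)
qed

lemma L: assumes "g \<noteq> 0" "ipoly g z = 0" shows "degree g \<ge> p - 1"
proof (rule ccontr)
  assume "\<not> degree g \<ge> p - 1"
  define P where "P d \<longleftrightarrow> (\<exists>g. g \<noteq> 0 \<and> ipoly g z = 0 \<and> degree g = d)" for d
  have Pg: "P (degree g)" using assms unfolding P_def by blast
  define m where "m = (LEAST d. P d)"
  have Pm: "P m" unfolding m_def by (rule LeastI[of P, OF Pg])
  have mle: "m \<le> degree g" unfolding m_def by (rule Least_le[of P, OF Pg])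
  have minim: "\<And>h. h \<noteq> 0 \<Longrightarrow> ipoly h z = 0 \<Longrightarrow> m \<le> degree h"
    unfolding m_def by (rule Least_le) (auto simp: P_def)
  from Pm obtain g0 where g0: "g0 \<noteq> 0" "ipoly g0 z = 0" "degree g0 = m" unfolding P_def by blast
  define g' where "g' = primitive_part g0"
  have "ipoly g0 z = of_int (content g0) * ipoly g' z"
    by (metis g'_def content_times_primitive_part ipoly_smult)
  hence g'z: "ipoly g' z = 0" using g0 by simp
  have g'nz: "g' \<noteq> 0" and dg': "degree g' = m" and cg': "content g' = 1"
    using g0 by (auto simp: g'_def)
  obtain q r where qr: "pseudo_divmod Phi g' = (q, r)" by (cases "pseudo_divmod Phi g'") auto
  define a where "a = coeff g' (degree g') ^ (Suc (degree Phi) - degree g')"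
  have eq: "smult a Phi = g' * q + r" and rdeg: "r = 0 \<or> degree r < degree g'"
    using pseudo_divmod[OF g'nz qr] by (auto simp: a_def)
  have anz: "a \<noteq> 0" using g'nz by (simp add: a_def)
  have "ipoly (smult a Phi) z = ipoly (g' * q + r) z" using eq by simp
  hence rz: "ipoly r z = 0" using g'z ipoly_Phi_z1 by simp
  have r0: "r = 0"
  proof (rule ccontr)
    assume "r \<noteq> 0"
    hence "m \<le> degree r" using minim rz by blast
    thus False using rdeg \<open>r \<noteq> 0\<close> dg' by simp
  qed
  have "g' dvd Phi" using dvd_from_smult[OF cg' anz] eq r0 by simp
  then obtain h where h: "Phi = g' * h" by (elim dvdE)
  hence "is_unit g' \<or> is_unit h" using Phi_irreducible irreducibleD by blast
  thus False
  proof
    assume "is_unit g'"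
    then obtain c where "g' = [:c:]" using is_unit_poly_iff by blast
    thus False using g'z g'nz by simp
  next
    assume "is_unit h"
    then obtain c where c: "h = [:c:]" "c dvd 1" using is_unit_poly_iff by blast
    hence "c \<noteq> 0" by auto
    hence "degree Phi = degree g'" using h c by simp
    thus False using dg' mle \<open>\<not> degree g \<ge> p - 1\<close> degree_Phi by simp
  qed
qed

lemma Phi_dvd: assumes "ipoly f z = 0" shows "Phi dvd f"
proof -
  obtain q r where qr: "pseudo_divmod f Phi = (q, r)" by (cases "pseudo_divmod f Phi") auto
  have eq: "smult 1 f = Phi * q + r" and rdeg: "r = 0 \<or> degree r < degree Phi"
    using pseudo_divmod[OF Phi_nz qr] lead_Phi by auto
  have "ipoly r z = 0" using eq assms ipoly_Phi_z1
    by (metis add_0 ipoly_add ipoly_mult mult_zero_left smult_1_left)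
  hence "r = 0" using L rdeg degree_Phi by fastforce
  thus ?thesis using eq by simp
qed

lemma vanish: assumes "ipoly f z = 0" "\<not> p dvd j" shows "ipoly f (z ^ j) = 0"
proof -
  from Phi_dvd[OF assms(1)] obtain h where "f = Phi * h" by (elim dvdE)
  thus ?thesis using ipoly_Phi_z[OF assms(2)] by simp
qed

lemma transfer: "ipoly f z = ipoly g z \<Longrightarrow> \<not> p dvd j \<Longrightarrow> ipoly f (z ^ j) = ipoly g (z ^ j)"
  using vanish[of "f - g" j] by simp

lemma reduced: "\<exists>g. degree g < p - 1 \<and> ipoly g z = ipoly f z"
proof -
  obtain q r where qr: "pseudo_divmod f Phi = (q, r)" by (cases "pseudo_divmod f Phi") auto
  have eq: "smult 1 f = Phi * q + r" and rdeg: "r = 0 \<or> degree r < degree Phi"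
    using pseudo_divmod[OF Phi_nz qr] lead_Phi by auto
  have "ipoly r z = ipoly f z" using eq ipoly_Phi_z1
    by (metis add_0 ipoly_add ipoly_mult mult_zero_left smult_1_left)
  moreover have "degree r < p - 1" using rdeg degree_Phi p_ge3 by auto
  ultimately show ?thesis by blast
qed

lemma reduced_unique:
  assumes "degree g1 < p - 1" "degree g2 < p - 1" "ipoly g1 z = ipoly g2 z"
  shows "g1 = g2"
proof (rule ccontr)
  assume "g1 \<noteq> g2"
  hence "g1 - g2 \<noteq> 0" by simp
  moreover have "ipoly (g1 - g2) z = 0" using assms by simp
  ultimately have "degree (g1 - g2) \<ge> p - 1" by (rule L)
  moreover have "degree (g1 - g2) \<le> max (degree g1) (degree g2)" by (rule degree_diff_le_max)
  ultimately show False using assms by simp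
qed

end

context cyc
begin

definition rep :: "complex \<Rightarrow> int poly" where "rep x = (SOME f. x = ipoly f z)"
definition sig :: "nat \<Rightarrow> complex \<Rightarrow> complex" where "sig j x = ipoly (rep x) (z ^ j)"

abbreviation J where "J \<equiv> {1..<p}"

lemma J_ndvd: "j \<in> J \<Longrightarrow> \<not> p dvd j"
  by (auto dest: dvd_imp_le)

lemma rep: "x \<in> ZZ \<Longrightarrow> x = ipoly (rep x) z"
  unfolding rep_def using ZZ_iff by (metis (mono_tags) someI_ex)

lemma sig_eq: "x = ipoly f z \<Longrightarrow> \<not> p dvd j \<Longrightarrow> sig j x = ipoly f (z ^ j)"
  unfolding sig_def using rep[of x] transfer by (metis ZZ_ipoly)

lemma sig_add: assumes "x \<in> ZZ" "y \<in> ZZ" "\<not> p dvd j" shows "sig j (x + y) = sig j x + sig j y"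
proof -
  obtain f g where f: "x = ipoly f z" "y = ipoly g z" using assms ZZ_iff by blast
  show ?thesis using sig_eq[OF f(1) assms(3)] sig_eq[OF f(2) assms(3)] sig_eq[of "x + y" "f + g"] assms(3) f by simp
qed
lemma sig_diff: assumes "x \<in> ZZ" "y \<in> ZZ" "\<not> p dvd j" shows "sig j (x - y) = sig j x - sig j y"
proof -
  obtain f g where f: "x = ipoly f z" "y = ipoly g z" using assms ZZ_iff by blast
  show ?thesis using sig_eq[OF f(1) assms(3)] sig_eq[OF f(2) assms(3)] sig_eq[of "x - y" "f - g"] assms(3) f by simp
qed
lemma sig_mult: assumes "x \<in> ZZ" "y \<in> ZZ" "\<not> p dvd j" shows "sig j (x * y) = sig j x * sig j y"
proof -
  obtain f g where f: "x = ipoly f z" "y = ipoly g z" using assms ZZ_iff by blast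
  show ?thesis using sig_eq[OF f(1) assms(3)] sig_eq[OF f(2) assms(3)] sig_eq[of "x * y" "f * g"] assms(3) f by simp
qed
lemma sig_power: assumes "x \<in> ZZ" "\<not> p dvd j" shows "sig j (x ^ n) = sig j x ^ n"
proof -
  obtain f where f: "x = ipoly f z" using assms ZZ_iff by blast
  show ?thesis using sig_eq[OF f(1) assms(2)] sig_eq[of "x ^ n" "f ^ n"] assms(2) f by simp
qed
lemma sig_of_int [simp]: "\<not> p dvd j \<Longrightarrow> sig j (of_int n) = of_int n"
  using sig_eq[of "of_int n" "[:n:]"] by simp
lemma sig_of_nat [simp]: "\<not> p dvd j \<Longrightarrow> sig j (of_nat n) = of_nat n"
  using sig_of_int[of j "int n"] by simp
lemma sig_0 [simp]: "\<not> p dvd j \<Longrightarrow> sig j 0 = 0" using sig_of_int[of j 0] by simp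
lemma sig_1' [simp]: "\<not> p dvd j \<Longrightarrow> sig j 1 = 1" using sig_of_int[of j 1] by simp
lemma sig_zpow: "\<not> p dvd j \<Longrightarrow> sig j (z ^ k) = z ^ (j * k)"
  using sig_eq[of "z ^ k" "monom 1 k"] by (simp add: power_mult)
lemma sig_in [intro]: "sig j x \<in> ZZ"
  unfolding sig_def by (rule ZZ_ipoly_at) auto
lemma sig_id: assumes "x \<in> ZZ" shows "sig 1 x = x"
proof -
  obtain f where f: "x = ipoly f z" using assms ZZ_iff by blast
  have "\<not> p dvd 1" using p_ge3 by auto
  thus ?thesis using sig_eq[OF f] f by simp
qed
lemma sig_mod: "sig j x = sig (j mod p) x"
  unfolding sig_def using z_pow_mod by metis

lemma sig_sig: assumes "x \<in> ZZ" "\<not> p dvd j" "\<not> p dvd k"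
  shows "sig k (sig j x) = sig (k * j) x"
proof -
  obtain f where f: "x = ipoly f z" using assms ZZ_iff by blast
  have "sig j x = ipoly f (z ^ j)" using sig_eq[OF f assms(2)] .
  also have "\<dots> = ipoly (pcompose f (monom 1 j)) z" by (simp add: ipoly_pcompose)
  finally have "sig k (sig j x) = ipoly (pcompose f (monom 1 j)) (z ^ k)"
    using sig_eq assms(3) by blast
  also have "\<dots> = ipoly f (z ^ (k * j))" by (simp add: ipoly_pcompose power_mult)
  also have "\<not> p dvd k * j" using assms pr by (simp add: prime_dvd_mult_iff)
  hence "ipoly f (z ^ (k * j)) = sig (k * j) x" using sig_eq[OF f] by simp
  finally show ?thesis .
qed

lemma sig_cnj: assumes "x \<in> ZZ" "\<not> p dvd j" shows "sig j (cnj x) = cnj (sig j x)"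
proof -
  obtain f where f: "x = ipoly f z" using assms ZZ_iff by blast
  have "cnj x = ipoly f (z ^ (p - 1))"
    using f ipoly_cnj cnj_z_pow[of 1] by (metis mult.right_neutral power_one_right)
  also have "\<dots> = ipoly (pcompose f (monom 1 (p - 1))) z" by (simp add: ipoly_pcompose)
  finally have "sig j (cnj x) = ipoly (pcompose f (monom 1 (p - 1))) (z ^ j)"
    using sig_eq assms(2) by blast
  also have "\<dots> = ipoly f ((z ^ j) ^ (p - 1))" by (simp add: ipoly_pcompose)
  also have "(z ^ j) ^ (p - 1) = cnj (z ^ j)" using cnj_z_pow[of j] by (simp add: power_mult mult.commute)
  also have "ipoly f (cnj (z ^ j)) = cnj (sig j x)"
    using sig_eq[OF f assms(2)] by (simp add: ipoly_cnj)
  finally show ?thesis .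
qed

lemma sig_sum: assumes "\<And>i. i \<in> A \<Longrightarrow> F i \<in> ZZ" "\<not> p dvd j"
  shows "sig j (sum F A) = (\<Sum>i\<in>A. sig j (F i))"
  using assms(1)
proof (induction A rule: infinite_finite_induct)
  case (insert a A)
  have "sum F A \<in> ZZ" using insert.prems by (intro ZZ_sum) auto
  thus ?case using insert assms(2) by (simp add: sig_add)
qed (use assms in auto)
lemma sig_prod: assumes "\<And>i. i \<in> A \<Longrightarrow> F i \<in> ZZ" "\<not> p dvd j"
  shows "sig j (prod F A) = (\<Prod>i\<in>A. sig j (F i))"
  using assms(1)
proof (induction A rule: infinite_finite_induct)
  case (insert a A)
  have "prod F A \<in> ZZ" using insert.prems by (intro ZZ_prod) auto
  thus ?case using insert assms(2) by (simp add: sig_mult)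
qed (use assms in auto)

lemma perm: assumes "\<not> p dvd k" shows "bij_betw (\<lambda>j. (k * j) mod p) J J"
proof -
  have inj: "inj_on (\<lambda>j. (k * j) mod p) J"
  proof (rule inj_onI)
    fix i j assume ij: "i \<in> J" "j \<in> J" "(k * i) mod p = (k * j) mod p"
    hence "int (k * i) mod int p = int (k * j) mod int p" by (metis of_nat_mod)
    hence "int p dvd int k * (int i - int j)" by (simp add: mod_eq_dvd_iff algebra_simps)
    moreover have "\<not> int p dvd int k" using assms by simp
    moreover have "prime (int p)" using pr by simp
    ultimately have "int p dvd int i - int j" by (simp add: prime_dvd_mult_iff)
    moreover have "\<bar>int i - int j\<bar> < int p" using ij by auto
    ultimately have "int i - int j = 0"
      using dvd_imp_le_int[of "int i - int j" "int p"] by fastforce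
    thus "i = j" by simp
  qed
  have sub: "(\<lambda>j. (k * j) mod p) ` J \<subseteq> J"
  proof
    fix x assume "x \<in> (\<lambda>j. (k * j) mod p) ` J"
    then obtain j where j: "j \<in> J" "x = (k * j) mod p" by blast
    have "\<not> p dvd k * j" using assms J_ndvd[OF j(1)] pr by (simp add: prime_dvd_mult_iff)
    hence "x \<noteq> 0" using j by (simp add: dvd_eq_mod_eq_0)
    moreover have "x < p" using j p_pos by simp
    ultimately show "x \<in> J" by simp
  qed
  have "(\<lambda>j. (k * j) mod p) ` J = J"
    using inj sub by (intro endo_inj_surj) auto
  thus ?thesis using inj by (simp add: bij_betw_def)
qed

definition N :: "complex \<Rightarrow> complex" where "N x = (\<Prod>j\<in>J. sig j x)"
definition Tr :: "complex \<Rightarrow> complex" where "Tr x = (\<Sum>j\<in>J. sig j x)"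

lemma N_in: "N x \<in> ZZ" unfolding N_def by auto
lemma Tr_in: "Tr x \<in> ZZ" unfolding Tr_def by auto

lemma N_fix: assumes "x \<in> ZZ" "\<not> p dvd k" shows "sig k (N x) = N x"
proof -
  have "sig k (N x) = (\<Prod>j\<in>J. sig k (sig j x))"
    unfolding N_def using assms by (intro sig_prod) auto
  also have "\<dots> = (\<Prod>j\<in>J. sig ((k * j) mod p) x)"
    using assms J_ndvd by (intro prod.cong refl) (simp add: sig_sig sig_mod[of "k * _"])
  also have "\<dots> = (\<Prod>j\<in>J. sig j x)"
    using prod.reindex_bij_betw[OF perm[OF assms(2)], of "\<lambda>j. sig j x"] by simp
  finally show ?thesis unfolding N_def .
qed

lemma Tr_fix: assumes "x \<in> ZZ" "\<not> p dvd k" shows "sig k (Tr x) = Tr x"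
proof -
  have "sig k (Tr x) = (\<Sum>j\<in>J. sig k (sig j x))"
    unfolding Tr_def using assms by (intro sig_sum) auto
  also have "\<dots> = (\<Sum>j\<in>J. sig ((k * j) mod p) x)"
    using assms J_ndvd by (intro sum.cong refl) (simp add: sig_sig sig_mod[of "k * _"])
  also have "\<dots> = (\<Sum>j\<in>J. sig j x)"
    using sum.reindex_bij_betw[OF perm[OF assms(2)], of "\<lambda>j. sig j x"] by simp
  finally show ?thesis unfolding Tr_def .
qed

end

lemma ipoly_as_sum:
  assumes "degree g < n"
  shows "ipoly g w = (\<Sum>k<n. of_int (coeff g k) * w ^ k)"
proof -
  have dm: "degree (map_poly (of_int :: int \<Rightarrow> complex) g) = degree g"
    by (rule degree_map_poly) simp
  have "ipoly g w = (\<Sum>k\<le>degree g. of_int (coeff g k) * w ^ k)"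
    unfolding ipoly_def by (subst poly_altdef) (simp add: dm coeff_map_poly)
  also have "\<dots> = (\<Sum>k<n. of_int (coeff g k) * w ^ k)"
    using assms by (intro sum.mono_neutral_left) (auto simp: coeff_eq_0)
  finally show ?thesis .
qed

context cyc
begin

lemma dvd_crit: "k < p \<Longrightarrow> i < p \<Longrightarrow> p dvd (k + (p - i)) \<longleftrightarrow> k = i"
proof
  assume ki: "k < p" "i < p" and d: "p dvd (k + (p - i))"
  then obtain c where c: "k + (p - i) = p * c" by (elim dvdE)
  have "0 < k + (p - i)" using ki by simp
  hence "c \<ge> 1" using c by (cases c) auto
  moreover have "k + (p - i) < p * 2" using ki by simp
  ultimately have "p * c < p * 2" using c by simp
  hence "c < 2" by simp
  hence "c = 1" using \<open>c \<ge> 1\<close> by simp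
  thus "k = i" using c ki by simp
qed simp

lemma CF:
  assumes dg: "degree g < p - 1" and i: "i < p"
  shows "(\<Sum>j\<in>J. ipoly g (z ^ j) * z ^ (j * (p - i))) = of_int (int p * coeff g i - (\<Sum>k<p. coeff g k))"
proof -
  have dg': "degree g < p" using dg by simp
  have "(\<Sum>j\<in>J. ipoly g (z ^ j) * z ^ (j * (p - i)))
      = (\<Sum>j\<in>J. \<Sum>k<p. of_int (coeff g k) * z ^ (j * (k + (p - i))))"
  proof (intro sum.cong refl)
    fix j
    have e: "(z ^ j) ^ k * z ^ (j * (p - i)) = z ^ (j * (k + (p - i)))" for k
    proof -
      have "(z ^ j) ^ k * z ^ (j * (p - i)) = z ^ (j * k) * z ^ (j * (p - i))" by (simp only: power_mult)
      also have "\<dots> = z ^ (j * k + j * (p - i))" by (simp only: power_add)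
      also have "j * k + j * (p - i) = j * (k + (p - i))" by (simp only: add_mult_distrib2)
      finally show ?thesis .
    qed
    have "ipoly g (z ^ j) * z ^ (j * (p - i)) = (\<Sum>k<p. of_int (coeff g k) * (z ^ j) ^ k) * z ^ (j * (p - i))"
      by (simp only: ipoly_as_sum[OF dg'])
    also have "\<dots> = (\<Sum>k<p. of_int (coeff g k) * ((z ^ j) ^ k * z ^ (j * (p - i))))"
      by (simp only: sum_distrib_right mult.assoc)
    also have "\<dots> = (\<Sum>k<p. of_int (coeff g k) * z ^ (j * (k + (p - i))))"
      by (simp only: e)
    finally show "ipoly g (z ^ j) * z ^ (j * (p - i)) = (\<Sum>k<p. of_int (coeff g k) * z ^ (j * (k + (p - i))))" .
  qed
  also have "\<dots> = (\<Sum>k<p. of_int (coeff g k) * (\<Sum>j\<in>J. z ^ (j * (k + (p - i)))))"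
    by (subst sum.swap) (simp add: sum_distrib_left)
  also have "\<dots> = (\<Sum>k<p. of_int (coeff g k) * (of_nat p * (if k = i then 1 else 0) - 1))"
  proof (intro sum.cong refl)
    fix k assume "k \<in> {..<p}"
    hence "(\<Sum>j\<in>J. z ^ (j * (k + (p - i)))) = (if k = i then of_nat p - 1 else -1)"
      using R_sum[of "k + (p - i)"] dvd_crit[OF _ i, of k] by simp
    thus "of_int (coeff g k) * (\<Sum>j\<in>J. z ^ (j * (k + (p - i)))) =
          of_int (coeff g k) * (of_nat p * (if k = i then 1 else 0) - 1)" by simp
  qed
  also have "\<dots> = of_nat p * of_int (coeff g i) - (\<Sum>k<p. of_int (coeff g k))"
  proof -
    have "(\<Sum>k<p. of_int (coeff g k) * (of_nat p * (if k = i then 1 else 0) - 1))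
       = (\<Sum>k<p. of_nat p * (if k = i then of_int (coeff g k) else 0) - of_int (coeff g k) :: complex)"
      by (intro sum.cong refl) (simp add: algebra_simps)
    also have "\<dots> = of_nat p * (\<Sum>k<p. (if k = i then of_int (coeff g k) else 0)) - (\<Sum>k<p. of_int (coeff g k))"
      by (simp only: sum_subtractf sum_distrib_left)
    also have "(\<Sum>k<p. (if k = i then of_int (coeff g k) else 0)) = (of_int (coeff g i) :: complex)"
      using i by (simp add: sum.delta)
    finally show ?thesis .
  qed
  finally show ?thesis by simp
qed

lemma FIX:
  assumes x: "x \<in> ZZ" and fx: "\<And>j. j \<in> J \<Longrightarrow> sig j x = x"
  shows "\<exists>n. x = of_int n"
proof -
  obtain f where f: "x = ipoly f z" using x ZZ_iff by blast
  obtain g where g: "degree g < p - 1" "ipoly g z = ipoly f z" using reduced by blast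
  have gx: "ipoly g z = x" using f g by simp
  have gj: "ipoly g (z ^ j) = x" if "j \<in> J" for j
    using sig_eq[of x g j] gx fx that J_ndvd by auto
  define S where "S = (\<Sum>k<p. coeff g k)"
  have key: "of_int (int p * coeff g i - S) = - x" if "1 \<le> i" "i < p" for i
  proof -
    have "of_int (int p * coeff g i - S) = (\<Sum>j\<in>J. ipoly g (z ^ j) * z ^ (j * (p - i)))"
      using CF[OF g(1) that(2)] by (simp add: S_def)
    also have "\<dots> = x * (\<Sum>j\<in>J. z ^ (j * (p - i)))"
      by (simp add: gj sum_distrib_left)
    also have "\<dots> = - x"
    proof -
      have "\<not> p dvd (p - i)" using that by (auto dest: dvd_imp_le)
      thus ?thesis using R_sum[of "p - i"] by simp
    qed
    finally show ?thesis .
  qed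
  have cp1: "coeff g (p - 1) = 0" using g(1) by (simp add: coeff_eq_0)
  have "of_int (- S) = - x" using key[of "p - 1"] cp1 p_ge3 by simp
  hence ci: "coeff g i = 0" if "1 \<le> i" "i < p" for i
    using key[OF that] p_pos by (simp add: of_int_eq_iff[symmetric])
  have "g = [:coeff g 0:]"
  proof (rule poly_eqI)
    fix n show "coeff g n = coeff [:coeff g 0:] n"
    proof (cases "n = 0")
      case False
      show ?thesis
      proof (cases "n < p")
        case True thus ?thesis using False ci by (simp add: coeff_pCons split: nat.split)
      next
        case False' : False
        hence "coeff g n = 0" using g(1) by (simp add: coeff_eq_0)
        thus ?thesis using False by (simp add: coeff_pCons split: nat.split)
      qed
    qed simp
  qed
  hence "x = of_int (coeff g 0)" using gx by (metis ipoly_const)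
  thus ?thesis by blast
qed

lemma N_int: "x \<in> ZZ \<Longrightarrow> \<exists>n. N x = of_int n"
  using FIX[OF N_in] N_fix J_ndvd by blast

lemma Tr_int: "x \<in> ZZ \<Longrightarrow> \<exists>n. Tr x = of_int n"
  using FIX[OF Tr_in] Tr_fix J_ndvd by blast

lemma DIVINT:
  assumes w: "w \<in> ZZ" and e: "(of_int n :: complex) = of_int d * w" and d: "d \<noteq> 0"
  shows "d dvd n"
proof -
  have "sig j w = w" if "j \<in> J" for j
  proof -
    have "of_int n = sig j (of_int d * w)" using e J_ndvd[OF that] by (metis sig_of_int)
    also have "\<dots> = of_int d * sig j w" using sig_mult[of "of_int d" w j] w J_ndvd[OF that] by simp
    finally show ?thesis using e d by simp
  qed
  then obtain m where "w = of_int m" using FIX[OF w] by blast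
  hence "(of_int n :: complex) = of_int (d * m)" using e by simp
  hence "n = d * m" by (simp only: of_int_eq_iff)
  thus ?thesis by simp
qed

end

context cyc
begin

abbreviation l where "l \<equiv> 1 - z"

lemma l_nz: "l \<noteq> 0" using z_ne1 by simp
lemma ZZ_l [simp, intro]: "l \<in> ZZ" by auto

lemma p_prod: "of_nat p = (\<Prod>j\<in>J. 1 - z ^ j)"
proof -
  define Q :: "complex poly" where "Q = (\<Prod>j\<in>J. [:- (z ^ j), 1:])"
  define P :: "complex poly" where "P = map_poly of_int Phi"
  have dP: "degree P = p - 1" unfolding P_def by (simp add: degree_map_poly degree_Phi)
  have cP: "coeff P (p - 1) = 1" unfolding P_def using p_pos by (simp add: coeff_map_poly coeff_Phi)
  have dQ: "degree Q = p - 1" unfolding Q_def by (subst degree_prod_sum_eq) auto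
  have lQ: "lead_coeff Q = 1" unfolding Q_def by (simp add: lead_coeff_prod)
  define A where "A = (\<lambda>j. z ^ j) ` J"
  have cA: "card A = p - 1"
    unfolding A_def by (subst card_image) (auto intro!: inj_onI z_inj)
  have "P = Q"
  proof (rule poly_eqI_degree_lead_coeff[of P "p - 1" Q A])
    show "coeff P (p - 1) = coeff Q (p - 1)" using cP lQ dQ by simp
    show "p - 1 \<le> card A" using cA by simp
    show "degree P \<le> p - 1" using dP by simp
    show "degree Q \<le> p - 1" using dQ by simp
    fix w assume "w \<in> A"
    then obtain j where j: "j \<in> J" "w = z ^ j" unfolding A_def by blast
    have "poly P w = 0" using ipoly_Phi_z[OF J_ndvd[OF j(1)]] j by (simp add: P_def ipoly_def)
    moreover have "poly Q w = 0" unfolding Q_def poly_prod using j by (auto intro: prod_zero)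
    ultimately show "poly P w = poly Q w" by simp
  qed
  have "poly P 1 = of_nat p" by (simp add: P_def flip: ipoly_def) (simp add: ipoly_Phi)
  moreover have "poly Q 1 = (\<Prod>j\<in>J. 1 - z ^ j)" unfolding Q_def poly_prod by simp
  ultimately show ?thesis using \<open>P = Q\<close> by simp
qed

definition sj :: "nat \<Rightarrow> complex" where "sj j = (\<Sum>i<j. z ^ i)"

lemma sj_in [intro]: "sj j \<in> ZZ" unfolding sj_def by auto

lemma one_minus_zj: "1 - z ^ j = l * sj j"
  unfolding sj_def by (rule one_diff_power_eq)

lemma sj_unit: assumes j: "j \<in> J" shows "\<exists>t\<in>ZZ. sj j * t = 1"
proof -
  have "1 \<in> (\<lambda>i. (j * i) mod p) ` J" using perm[OF J_ndvd[OF j]] p_ge3 unfolding bij_betw_def by auto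
  then obtain j' where j': "(j * j') mod p = 1" by auto
  have "z ^ (j * j') = z" using z_pow_mod[of "j * j'"] j' by simp
  hence "l = 1 - (z ^ j) ^ j'" by (simp add: power_mult)
  also have "\<dots> = (1 - z ^ j) * (\<Sum>i<j'. (z ^ j) ^ i)" by (rule one_diff_power_eq)
  also have "\<dots> = l * (sj j * (\<Sum>i<j'. (z ^ j) ^ i))" by (simp add: one_minus_zj)
  finally have "sj j * (\<Sum>i<j'. (z ^ j) ^ i) = 1" using l_nz by simp
  moreover have "(\<Sum>i<j'. (z ^ j) ^ i) \<in> ZZ" by auto
  ultimately show ?thesis by blast
qed

definition e :: complex where "e = (\<Prod>j\<in>J. sj j)"
definition e' :: complex where "e' = (\<Prod>j\<in>J. (SOME t. t \<in> ZZ \<and> sj j * t = 1))"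

lemma e_in [intro]: "e \<in> ZZ" unfolding e_def by auto
lemma e'_in [intro]: "e' \<in> ZZ"
  unfolding e'_def
proof (intro ZZ_prod)
  fix j assume j: "j \<in> J"
  have "\<exists>t. t \<in> ZZ \<and> sj j * t = 1" using sj_unit[OF j] by blast
  from someI_ex[OF this] show "(SOME t. t \<in> ZZ \<and> sj j * t = 1) \<in> ZZ" by blast
qed
lemma ee': "e * e' = 1"
proof -
  have "e * e' = (\<Prod>j\<in>J. sj j * (SOME t. t \<in> ZZ \<and> sj j * t = 1))"
    unfolding e_def e'_def by (simp add: prod.distrib)
  also have "\<dots> = 1"
  proof (intro prod.neutral ballI)
    fix j assume j: "j \<in> J"
    have "\<exists>t. t \<in> ZZ \<and> sj j * t = 1" using sj_unit[OF j] by blast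
    from someI_ex[OF this] show "sj j * (SOME t. t \<in> ZZ \<and> sj j * t = 1) = 1" by blast
  qed
  finally show ?thesis .
qed

lemma p_eq: "of_nat p = l ^ (p - 1) * e"
proof -
  have "of_nat p = (\<Prod>j\<in>J. l * sj j)" using p_prod by (simp add: one_minus_zj)
  also have "\<dots> = l ^ (p - 1) * e" by (simp add: prod.distrib e_def)
  finally show ?thesis .
qed

lemma lp_eq: "l ^ (p - 1) = of_nat p * e'"
  using p_eq ee' by (metis mult.assoc mult.right_neutral)

definition lc :: "nat \<Rightarrow> complex \<Rightarrow> complex \<Rightarrow> bool" where
  "lc k x y \<longleftrightarrow> (\<exists>w\<in>ZZ. x - y = l ^ k * w)"

lemma lc_refl [simp]: "lc k x x" unfolding lc_def by (intro bexI[of _ 0]) auto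
lemma lc_sym: "lc k x y \<Longrightarrow> lc k y x"
  unfolding lc_def
proof (elim bexE)
  fix a assume "a \<in> ZZ" "x - y = l ^ k * a"
  hence "y - x = l ^ k * (- a)" by (simp add: algebra_simps)
  thus "\<exists>c\<in>ZZ. y - x = l ^ k * c" using \<open>a \<in> ZZ\<close> by blast
qed
lemma lc_trans: "lc k x y \<Longrightarrow> lc k y w \<Longrightarrow> lc k x w"
  unfolding lc_def
proof (elim bexE)
  fix a b assume "a \<in> ZZ" "b \<in> ZZ" "x - y = l ^ k * a" "y - w = l ^ k * b"
  moreover have "x - w = (x - y) + (y - w)" by simp
  ultimately have "x - w = l ^ k * (a + b)" by (simp add: distrib_left)
  thus "\<exists>c\<in>ZZ. x - w = l ^ k * c" using \<open>a \<in> ZZ\<close> \<open>b \<in> ZZ\<close> by blast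
qed
lemma lc_add: "lc k x y \<Longrightarrow> lc k x' y' \<Longrightarrow> lc k (x + x') (y + y')"
  unfolding lc_def
proof (elim bexE)
  fix a b assume "a \<in> ZZ" "b \<in> ZZ" "x - y = l ^ k * a" "x' - y' = l ^ k * b"
  hence "x + x' - (y + y') = l ^ k * (a + b)" by (simp add: algebra_simps)
  thus "\<exists>c\<in>ZZ. x + x' - (y + y') = l ^ k * c" using \<open>a \<in> ZZ\<close> \<open>b \<in> ZZ\<close> by blast
qed
lemma lc_diff: "lc k x y \<Longrightarrow> lc k x' y' \<Longrightarrow> lc k (x - x') (y - y')"
  unfolding lc_def
proof (elim bexE)
  fix a b assume "a \<in> ZZ" "b \<in> ZZ" "x - y = l ^ k * a" "x' - y' = l ^ k * b"
  hence "x - x' - (y - y') = l ^ k * (a - b)" by (simp add: algebra_simps)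
  thus "\<exists>c\<in>ZZ. x - x' - (y - y') = l ^ k * c" using \<open>a \<in> ZZ\<close> \<open>b \<in> ZZ\<close> by blast
qed
lemma lc_mult: "lc k x y \<Longrightarrow> lc k x' y' \<Longrightarrow> x \<in> ZZ \<Longrightarrow> y' \<in> ZZ \<Longrightarrow> lc k (x * x') (y * y')"
  unfolding lc_def
proof (elim bexE)
  fix a b assume "a \<in> ZZ" "b \<in> ZZ" "x - y = l ^ k * a" "x' - y' = l ^ k * b" "x \<in> ZZ" "y' \<in> ZZ"
  hence "x * x' - y * y' = l ^ k * (x * b + a * y')"
  proof -
    have "x * x' - y * y' = x * (x' - y') + (x - y) * y'" by (simp add: algebra_simps)
    thus ?thesis using \<open>x - y = _\<close> \<open>x' - y' = _\<close> by (simp add: algebra_simps)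
  qed
  thus "\<exists>c\<in>ZZ. x * x' - y * y' = l ^ k * c" using \<open>a \<in> ZZ\<close> \<open>b \<in> ZZ\<close> \<open>x \<in> ZZ\<close> \<open>y' \<in> ZZ\<close> by blast
qed
lemma lc_mono: "lc k x y \<Longrightarrow> k' \<le> k \<Longrightarrow> lc k' x y"
  unfolding lc_def
proof (elim bexE)
  fix a assume "a \<in> ZZ" "x - y = l ^ k * a" "k' \<le> k"
  hence "x - y = l ^ k' * (l ^ (k - k') * a)" by (simp add: mult.assoc[symmetric] power_add[symmetric])
  thus "\<exists>c\<in>ZZ. x - y = l ^ k' * c" using \<open>a \<in> ZZ\<close> by blast
qed
lemma lc_multiple: "w \<in> ZZ \<Longrightarrow> lc k (l ^ k * w) 0" unfolding lc_def by auto
lemma lc_0: "lc 0 x y \<longleftrightarrow> x - y \<in> ZZ" unfolding lc_def by auto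

lemma lc_pow: "lc k x y \<Longrightarrow> x \<in> ZZ \<Longrightarrow> y \<in> ZZ \<Longrightarrow> lc k (x ^ n) (y ^ n)"
  by (induction n) (auto intro: lc_mult)

lemma int_in_l: assumes "w \<in> ZZ" "of_int n = l * w" shows "int p dvd n"
proof -
  have "of_int (n ^ (p - 1)) = l ^ (p - 1) * w ^ (p - 1)" using assms by (simp add: power_mult_distrib)
  also have "\<dots> = of_int (int p) * (e' * w ^ (p - 1))" using lp_eq by (simp add: mult_ac)
  finally have "int p dvd n ^ (p - 1)"
    using DIVINT[of "e' * w ^ (p - 1)" "n ^ (p - 1)" "int p"] assms p_pos by auto
  moreover have "prime (int p)" using pr by simp
  ultimately show ?thesis using prime_dvd_power by blast
qed

lemma lc_int: "x \<in> ZZ \<Longrightarrow> \<exists>n. lc 1 x (of_int n)"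
proof -
  assume "x \<in> ZZ"
  then obtain f where f: "x = ipoly f z" using ZZ_iff by blast
  have "poly (f - [:poly f 1:]) 1 = 0" by simp
  hence "[:-1, 1:] dvd f - [:poly f 1:]" using poly_eq_0_iff_dvd[of "f - [:poly f 1:]" 1] by simp
  then obtain q where q: "f - [:poly f 1:] = [:-1, 1:] * q" by (elim dvdE)
  have "x - of_int (poly f 1) = (z - 1) * ipoly q z"
    using arg_cong[OF q, of "\<lambda>g. ipoly g z"] f by (simp add: algebra_simps)
  hence "x - of_int (poly f 1) = l ^ 1 * (- ipoly q z)" by (simp add: algebra_simps)
  thus ?thesis unfolding lc_def by blast
qed

lemma lc_int_dvd: "lc 1 (of_int n) 0 \<Longrightarrow> int p dvd n"
  unfolding lc_def using int_in_l by auto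

lemma dvd_lc: "int p dvd n \<Longrightarrow> lc (p - 1) (of_int n) 0"
proof -
  assume "int p dvd n"
  then obtain c where "n = int p * c" by (elim dvdE)
  hence "of_int n = l ^ (p - 1) * (e * of_int c)" by (simp add: p_eq mult_ac)
  thus ?thesis unfolding lc_def using e_in by auto
qed

lemma pn_lc: "lc (n * (p - 1)) x y \<Longrightarrow> congZ p (int p ^ n) x y"
  unfolding lc_def congZ_def
proof (elim bexE)
  fix w assume "w \<in> ZZ" "x - y = l ^ (n * (p - 1)) * w"
  have "l ^ (n * (p - 1)) = (l ^ (p - 1)) ^ n" by (simp only: mult.commute[of n] power_mult)
  also have "\<dots> = of_int (int p ^ n) * e' ^ n" using lp_eq by (simp add: power_mult_distrib)
  finally have "x - y = of_int (int p ^ n) * (e' ^ n * w)" using \<open>x - y = _\<close> by (simp add: mult.assoc)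
  thus "\<exists>w\<in>ZZ. x - y = of_int (int p ^ n) * w" using \<open>w \<in> ZZ\<close> by blast
qed

end

context cyc
begin

lemma norm_sum_bound:
  assumes "\<And>j. j \<in> J \<Longrightarrow> norm (F j) = 1"
  shows "norm (\<Sum>j\<in>J. F j) \<le> real p - 1"
proof -
  have "norm (\<Sum>j\<in>J. F j) \<le> (\<Sum>j\<in>J. norm (F j))" by (rule norm_sum)
  also have "\<dots> = real p - 1" using assms p_pos by (simp add: of_nat_diff)
  finally show ?thesis .
qed

lemma coeff_bound:
  assumes dg: "degree g < p - 1" and nm: "\<And>j. j \<in> J \<Longrightarrow> norm (ipoly g (z ^ j)) = 1"
    and i: "i < p"
  shows "\<bar>coeff g i\<bar> \<le> 1"
proof -
  define S where "S = (\<Sum>k<p. coeff g k)"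
  have T: "norm (of_int (int p * coeff g k - S) :: complex) \<le> real p - 1" if "k < p" for k
  proof -
    have "(of_int (int p * coeff g k - S) :: complex) = (\<Sum>j\<in>J. ipoly g (z ^ j) * z ^ (j * (p - k)))"
      using CF[OF dg that] by (simp add: S_def)
    also have "norm \<dots> \<le> real p - 1"
      by (rule norm_sum_bound) (simp add: norm_mult nm)
    finally show ?thesis .
  qed
  have cp1: "coeff g (p - 1) = 0" using dg by (simp add: coeff_eq_0)
  have "norm (of_int (- S) :: complex) \<le> real p - 1" using T[of "p - 1"] cp1 p_pos by simp
  hence aS: "\<bar>S\<bar> \<le> int p - 1" by (simp only: norm_of_int)
  have "\<bar>int p * coeff g i - S\<bar> \<le> int p - 1"
    using T[OF i] by (simp only: norm_of_int)
  hence "\<bar>int p * coeff g i\<bar> \<le> 2 * int p - 2" using aS by linarith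
  hence "int p * \<bar>coeff g i\<bar> < int p * 2" by (simp add: abs_mult)
  hence "\<bar>coeff g i\<bar> < 2" using p_pos by (simp only: mult_less_cancel_left)
  thus ?thesis by simp
qed

lemma real_unit:
  assumes u: "u \<in> ZZ" and u': "u' \<in> ZZ" and uu': "u * u' = 1"
    and w: "w \<in> ZZ" and uw: "u - of_int a = of_nat p * w"
  shows "cnj u = u"
proof -
  define v where "v = u * cnj u'"
  have v: "v \<in> ZZ" unfolding v_def using u u' by auto
  obtain f where f: "v = ipoly f z" using v ZZ_iff by blast
  obtain g where g: "degree g < p - 1" "ipoly g z = v" using reduced[of f] f by auto
  have nm: "norm (ipoly g (z ^ j)) = 1" if j: "j \<in> J" for j
  proof -
    have nj: "\<not> p dvd j" using J_ndvd[OF j] .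
    have "ipoly g (z ^ j) = sig j v" using sig_eq[of v g j] g nj by simp
    also have "\<dots> = sig j u * cnj (sig j u')"
      unfolding v_def using sig_mult[OF u ZZ_cnj[OF u'] nj] sig_cnj[OF u' nj] by simp
    finally have 1: "ipoly g (z ^ j) = sig j u * cnj (sig j u')" .
    have "sig j u * sig j u' = 1" using sig_mult[OF u u' nj] uu' nj by simp
    hence "norm (sig j u) * norm (sig j u') = 1" by (metis norm_mult norm_one)
    thus ?thesis using 1 by (simp add: norm_mult)
  qed
  have "u - cnj u = of_nat p * (w - cnj w)"
  proof -
    have "cnj u - of_int a = of_nat p * cnj w" using arg_cong[OF uw, of cnj] by simp
    thus ?thesis using uw by (simp add: algebra_simps)
  qed
  moreover have "cnj u * cnj u' = 1" using arg_cong[OF uu', of cnj] by simp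
  ultimately have "v - 1 = of_nat p * ((w - cnj w) * cnj u')"
  proof -
    assume A: "u - cnj u = of_nat p * (w - cnj w)" and B: "cnj u * cnj u' = 1"
    have "v - 1 = u * cnj u' - cnj u * cnj u'" using B v_def by simp
    also have "\<dots> = (u - cnj u) * cnj u'" by (simp add: algebra_simps)
    also have "\<dots> = of_nat p * ((w - cnj w) * cnj u')" using A by simp
    finally show ?thesis .
  qed
  define y where "y = (w - cnj w) * cnj u'"
  have y: "y \<in> ZZ" unfolding y_def using w u' by auto
  have vy: "v - 1 = of_nat p * y" using \<open>v - 1 = _\<close> by (simp add: y_def)
  obtain f2 where f2: "y = ipoly f2 z" using y ZZ_iff by blast
  obtain h where h: "degree h < p - 1" "ipoly h z = y" using reduced[of f2] f2 by auto
  have "g - 1 = smult (int p) h"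
  proof (rule reduced_unique)
    show "degree (g - 1) < p - 1"
      using degree_diff_le_max[of g 1] g(1) p_ge3 by simp
    show "degree (smult (int p) h) < p - 1" using h(1) by simp
    show "ipoly (g - 1) z = ipoly (smult (int p) h) z" using g(2) h(2) vy by simp
  qed
  hence ch: "coeff g i - (if i = 0 then 1 else 0) = int p * coeff h i" for i
  proof -
    have "coeff (g - 1) i = coeff (smult (int p) h) i" using \<open>g - 1 = _\<close> by simp
    thus ?thesis by (cases i) auto
  qed
  have "h = 0"
  proof (rule poly_eqI)
    fix i
    show "coeff h i = coeff 0 i"
    proof (cases "i < p")
      case True
      have "\<bar>coeff g i\<bar> \<le> 1" by (rule coeff_bound[OF g(1) nm True])
      hence "\<bar>int p * coeff h i\<bar> \<le> 2" using ch[of i] by (auto split: if_splits)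
      hence "\<bar>int p * coeff h i\<bar> < int p * 1" using p_ge3 by linarith
      hence "\<bar>coeff h i\<bar> < 1" using p_pos by (simp add: abs_mult)
      thus ?thesis by simp
    next
      case False thus ?thesis using h(1) by (simp add: coeff_eq_0)
    qed
  qed
  hence "v = 1" using vy h(2) by simp
  hence "u * cnj u' = u * u'" using uu' v_def by simp
  moreover have "u \<noteq> 0" using uu' by auto
  ultimately have "cnj u' = u'" by simp
  hence "cnj u * u' = u * u'" using uu' \<open>cnj u * cnj u' = 1\<close> by simp
  moreover have "u' \<noteq> 0" using uu' by auto
  ultimately show ?thesis by simp
qed

end

lemma fermat_aux:
  fixes p n :: nat
  assumes pr: "prime p"
  shows "int p dvd int n ^ p - int n"
proof (induction n)
  case 0
  have "p > 0" using pr prime_gt_0_nat by blast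
  thus ?case by (simp add: zero_power)
next
  case (Suc n)
  have p2: "p \<ge> 2" using pr prime_ge_2_nat by blast
  have "(int n + 1) ^ p = (\<Sum>k\<le>p. of_nat (p choose k) * int n ^ k)"
    by (simp add: binomial_ring)
  also have "{..p} = insert 0 (insert p {1..<p})" using p2 by auto
  hence "(\<Sum>k\<le>p. of_nat (p choose k) * int n ^ k) =
      1 + (int n ^ p + (\<Sum>k\<in>{1..<p}. of_nat (p choose k) * int n ^ k))"
    using p2 by simp
  finally have eq: "(int n + 1) ^ p = 1 + (int n ^ p + (\<Sum>k\<in>{1..<p}. of_nat (p choose k) * int n ^ k))" .
  have "int p dvd (\<Sum>k\<in>{1..<p}. of_nat (p choose k) * int n ^ k)"
  proof (intro dvd_sum)
    fix k assume "k \<in> {1..<p}"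
    hence "p dvd (p choose k)" using dvd_choose_prime pr by auto
    hence "int p dvd int (p choose k)" by simp
    thus "int p dvd of_nat (p choose k) * int n ^ k" by simp
  qed
  hence D: "int p dvd (int n ^ p - int n) + (\<Sum>k\<in>{1..<p}. of_nat (p choose k) * int n ^ k)"
    using Suc by (intro dvd_add)
  have E: "int (Suc n) ^ p - int (Suc n) = (int n ^ p - int n) + (\<Sum>k\<in>{1..<p}. of_nat (p choose k) * int n ^ k)"
    using eq by (simp add: add.commute)
  from D show ?case by (simp only: E)
qed

lemma fermat_int:
  fixes p :: nat and a :: int
  assumes pr: "prime p" "\<not> int p dvd a"
  shows "int p dvd a ^ (p - 1) - 1"
proof -
  have pp: "p > 0" using assms prime_gt_0_nat by blast
  define b where "b = nat (a mod int p)"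
  have ib: "int b = a mod int p" using pp by (simp add: b_def)
  have 1: "int p dvd int b ^ p - int b" by (rule fermat_aux[OF pr(1)])
  have "(a ^ p - a) mod int p = (int b ^ p - int b) mod int p"
    using ib by (metis mod_diff_eq power_mod mod_mod_trivial)
  hence "int p dvd a ^ p - a" using 1 by (simp add: dvd_eq_mod_eq_0)
  moreover have "a ^ p - a = a * (a ^ (p - 1) - 1)"
    using pp by (simp add: algebra_simps power_eq_if)
  moreover have "prime (int p)" using pr by simp
  ultimately show ?thesis using assms(2) by (simp add: prime_dvd_mult_iff)
qed

context cyc
begin

lemma lc1_z: "lc 1 z 1"
  unfolding lc_def by (intro bexI[of _ "-1"]) auto

lemma cnj_l: "cnj l = - (z ^ (p - 1)) * l"
proof -
  have zz: "z ^ (p - 1) * z = 1" using z_pow_p p_pos by (metis power_Suc2 Suc_diff_1)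
  have "cnj l = 1 - z ^ (p - 1)" using cnj_z_pow[of 1] by simp
  also have "\<dots> = - (z ^ (p - 1)) * l" using zz by (simp add: algebra_simps)
  finally show ?thesis .
qed

lemma not_unit_l: assumes "x \<in> ZZ" "x' \<in> ZZ" "x * x' = 1" shows "\<not> lc 1 x 0"
proof
  assume "lc 1 x 0"
  hence "lc 1 (x * x') (0 * x')" using assms by (intro lc_mult) auto
  hence "lc 1 (of_int 1) 0" using assms by simp
  hence "int p dvd 1" by (rule lc_int_dvd)
  thus False using p_ge3 by simp
qed

lemma lc_l2:
  assumes u: "u \<in> ZZ" and cu: "cnj u = u" and w: "w \<in> ZZ" and uw: "u - of_int a = of_nat p * w"
  shows "\<exists>a' s. s \<in> ZZ \<and> u - of_int a' = of_nat p * l ^ 2 * s"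
proof -
  have "of_nat p * cnj w = cnj (u - of_int a)" using uw by simp
  also have "\<dots> = u - of_int a" using cu by simp
  also have "\<dots> = of_nat p * w" by (rule uw)
  finally have "of_nat p * cnj w = of_nat p * w" .
  hence cw: "cnj w = w" using p_pos by simp
  obtain b where "lc 1 w (of_int b)" using lc_int[OF w] by blast
  then obtain y where y: "y \<in> ZZ" "w - of_int b = l * y" unfolding lc_def by auto
  have "cnj (l * y) = cnj (w - of_int b)" by (simp only: y(2))
  also have "\<dots> = w - of_int b" using cw by simp
  also have "\<dots> = l * y" by (rule y(2))
  finally have "cnj (l * y) = l * y" .
  moreover have "cnj (l * y) = - (z ^ (p - 1)) * l * cnj y" by (simp only: complex_cnj_mult cnj_l)
  ultimately have "- (z ^ (p - 1)) * l * cnj y = l * y" by simp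
  hence "l * (- (z ^ (p - 1)) * cnj y) = l * y" by (simp add: mult_ac)
  hence yc: "y = - (z ^ (p - 1)) * cnj y" using l_nz by (simp only: mult_cancel_left) simp
  obtain c where "lc 1 y (of_int c)" using lc_int[OF y(1)] by blast
  then obtain t where t: "t \<in> ZZ" "y - of_int c = l * t" unfolding lc_def by auto
  have "cnj y - of_int c = cnj (y - of_int c)" by simp
  also have "\<dots> = cnj (l * t)" by (simp only: t(2))
  also have "\<dots> = - (z ^ (p - 1)) * l * cnj t" by (simp only: complex_cnj_mult cnj_l)
  also have "\<dots> = l * (- (z ^ (p - 1)) * cnj t)" by (simp add: mult_ac)
  finally have "cnj y - of_int c = l * (- (z ^ (p - 1)) * cnj t)" .
  moreover have "- (z ^ (p - 1)) * cnj t \<in> ZZ" using t(1) by auto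
  ultimately have lcy: "lc 1 (cnj y) (of_int c)" unfolding lc_def power_one_right by blast
  have "lc 1 (z ^ (p - 1)) (1 ^ (p - 1))" using lc1_z by (intro lc_pow) auto
  hence "lc 1 (0 - z ^ (p - 1)) (0 - 1 ^ (p - 1))" by (intro lc_diff) auto
  hence "lc 1 (- (z ^ (p - 1))) (- 1)" by simp
  hence "lc 1 (- (z ^ (p - 1)) * cnj y) (- 1 * of_int c)"
    using lcy y by (intro lc_mult) auto
  hence "lc 1 y (- of_int c)" using yc by simp
  hence "lc 1 (of_int c) (- of_int c)"
    using \<open>lc 1 y (of_int c)\<close> lc_sym lc_trans by blast
  hence "lc 1 (of_int c - (- of_int c)) 0" using lc_diff[of 1 "of_int c" "- of_int c" "- of_int c" "- of_int c"] by simp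
  hence "lc 1 (of_int (2 * c)) 0" by simp
  hence "int p dvd 2 * c" by (rule lc_int_dvd)
  moreover have "\<not> int p dvd 2"
  proof
    assume "int p dvd 2"
    hence "p dvd 2" by (metis of_nat_dvd_iff of_nat_numeral)
    thus False using p_ge3 by (auto dest: dvd_imp_le)
  qed
  moreover have "prime (int p)" using pr by simp
  ultimately have "int p dvd c" by (simp add: prime_dvd_mult_iff)
  hence "lc (p - 1) (of_int c) 0" by (rule dvd_lc)
  hence "lc 1 (of_int c) 0" using p_ge3 lc_mono[of "p - 1" "of_int c" 0 1] by simp
  hence "lc 1 y 0" using \<open>lc 1 y (of_int c)\<close> lc_trans by blast
  then obtain s where s: "s \<in> ZZ" "y = l * s" unfolding lc_def by auto
  have "u - of_int (a + int p * b) = of_nat p * (w - of_int b)" using uw by (simp add: algebra_simps)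
  also have "\<dots> = of_nat p * l ^ 2 * s" using y(2) s(2) by (simp add: power2_eq_square mult_ac)
  finally show ?thesis using s(1) by blast
qed

end

context cyc
begin

lemma N_mult: "x \<in> ZZ \<Longrightarrow> y \<in> ZZ \<Longrightarrow> N (x * y) = N x * N y"
  unfolding N_def by (simp add: sig_mult J_ndvd prod.distrib)

lemma N_one: "N 1 = 1"
  unfolding N_def by (simp add: J_ndvd)

lemma PE:
  fixes a :: int
  assumes "finite A" "\<And>j. j \<in> A \<Longrightarrow> t j \<in> ZZ"
  shows "\<exists>W\<in>ZZ. of_int a * (\<Prod>j\<in>A. of_int a + of_nat p * t j) =
     of_int a ^ (card A + 1) + of_int a ^ card A * (of_nat p * (\<Sum>j\<in>A. t j)) + (of_nat p) ^ 2 * W"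
  using assms
proof (induction A rule: finite_induct)
  case empty
  show ?case by (intro bexI[of _ 0]) auto
next
  case (insert x A)
  then obtain W where W: "W \<in> ZZ" and
    eq: "of_int a * (\<Prod>j\<in>A. of_int a + of_nat p * t j) =
     of_int a ^ (card A + 1) + of_int a ^ card A * (of_nat p * (\<Sum>j\<in>A. t j)) + (of_nat p) ^ 2 * W"
    by auto
  define n where "n = card A"
  define T where "T = (\<Sum>j\<in>A. t j)"
  have tx: "t x \<in> ZZ" using insert by auto
  have T: "T \<in> ZZ" unfolding T_def using insert by auto
  define W' where "W' = of_int a * W + t x * of_int a ^ n * T + of_nat p * t x * W"
  have W': "W' \<in> ZZ" unfolding W'_def using W tx T by (intro ZZ_add ZZ_mult ZZ_power ZZ_of_int ZZ_of_nat)
  have "of_int a * (\<Prod>j\<in>insert x A. of_int a + of_nat p * t j)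
      = (of_int a + of_nat p * t x) * (of_int a * (\<Prod>j\<in>A. of_int a + of_nat p * t j))"
    using insert by (simp add: mult_ac)
  also have "\<dots> = (of_int a + of_nat p * t x) * (of_int a ^ (n + 1) + of_int a ^ n * (of_nat p * T) + (of_nat p) ^ 2 * W)"
    by (simp only: eq n_def T_def)
  also have "\<dots> = of_int a ^ (n + 2) + of_int a ^ (n + 1) * (of_nat p * (t x + T)) + (of_nat p) ^ 2 * W'"
    unfolding W'_def by (simp add: algebra_simps power2_eq_square)
  finally show ?case using insert W' by (auto simp: n_def T_def add.commute)
qed

lemma sig_l: "\<not> p dvd j \<Longrightarrow> sig j l = 1 - z ^ j"
  using sig_diff[of 1 z j] sig_zpow[of j 1] by simp

lemma sig_l2s: assumes nj: "\<not> p dvd j" and s: "s \<in> ZZ"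
  shows "sig j (l ^ 2 * s) = (1 - z ^ j) ^ 2 * sig j s"
proof -
  have "sig j (l ^ 2 * s) = sig j (l ^ 2) * sig j s" using sig_mult[of "l ^ 2" s j] nj s by auto
  also have "sig j (l ^ 2) = sig j l ^ 2" using sig_power[of l j 2] nj by auto
  finally show ?thesis using sig_l[OF nj] by simp
qed

lemma norm_cong:
  assumes u: "u \<in> ZZ" and u': "u' \<in> ZZ" and uu': "u * u' = 1"
    and s: "s \<in> ZZ" and us: "u - of_int a = of_nat p * l ^ 2 * s"
  shows "int p ^ 2 dvd a ^ (p - 1) - 1"
proof -
  define t where "t j = (1 - z ^ j) ^ 2 * sig j s" for j
  have t: "t j \<in> ZZ" for j unfolding t_def by auto
  have sigu: "sig j u = of_int a + of_nat p * t j" if j: "j \<in> J" for j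
  proof -
    have nj: "\<not> p dvd j" using J_ndvd[OF j] .
    have u_eq: "u = of_int a + of_nat p * (l ^ 2 * s)" using us by (simp add: algebra_simps)
    have "sig j u = of_int a + sig j (of_nat p * (l ^ 2 * s))"
      using sig_add[of "of_int a" "of_nat p * (l ^ 2 * s)" j] nj s u_eq by auto
    also have "sig j (of_nat p * (l ^ 2 * s)) = of_nat p * sig j (l ^ 2 * s)"
      using sig_mult[of "of_nat p" "l ^ 2 * s" j] nj s by auto
    finally show ?thesis by (simp add: t_def sig_l2s[OF nj s])
  qed
  have Nu: "N u = (\<Prod>j\<in>J. of_int a + of_nat p * t j)" unfolding N_def using sigu by simp
  have "(\<Sum>j\<in>J. t j) = Tr (l ^ 2 * s)"
    unfolding Tr_def t_def using s J_ndvd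
    by (intro sum.cong refl) (simp add: sig_l2s)
  then obtain m where m: "(\<Sum>j\<in>J. t j) = of_int m" using Tr_int[of "l ^ 2 * s"] s by auto
  have "(\<Sum>j\<in>J. t j) = l * (l * (\<Sum>j\<in>J. sj j ^ 2 * sig j s))"
    unfolding t_def by (simp add: one_minus_zj sum_distrib_left power2_eq_square mult_ac)
  moreover have "l * (\<Sum>j\<in>J. sj j ^ 2 * sig j s) \<in> ZZ" by (intro ZZ_mult ZZ_sum ZZ_power) auto
  ultimately have "int p dvd m" using m int_in_l[of "l * (\<Sum>j\<in>J. sj j ^ 2 * sig j s)" m] by auto
  then obtain m' where m': "m = int p * m'" by (elim dvdE)
  obtain n1 where n1: "N u = of_int n1" using N_int[OF u] by blast
  obtain n2 where n2: "N u' = of_int n2" using N_int[OF u'] by blast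
  have "of_int (n1 * n2) = (1 :: complex)" using N_mult[OF u u'] uu' N_one n1 n2 by simp
  hence "n1 * n2 = 1" by (simp only: of_int_eq_1_iff)
  hence n1pm: "n1 = 1 \<or> n1 = -1" by (auto simp add: zmult_eq_1_iff)
  obtain W where W: "W \<in> ZZ" and
    eqW: "of_int a * (\<Prod>j\<in>J. of_int a + of_nat p * t j) =
     of_int a ^ (card J + 1) + of_int a ^ card J * (of_nat p * (\<Sum>j\<in>J. t j)) + (of_nat p) ^ 2 * W"
    using PE[of J t a] t by auto
  have cJ: "card J + 1 = p" "card J = p - 1" using p_pos by auto
  have ap: "(x::complex) * x ^ (p - 1) = x ^ p" for x
    using power_Suc[of x "p - 1"] Suc_diff_1[OF p_pos] by simp
  have ap': "(x::complex) * x ^ (p - Suc 0) = x ^ p" for x using ap by simp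
  have "of_int (a * n1 - a ^ p) = of_int (int p ^ 2) * (of_int (a ^ (p - 1) * m') + W)"
    using eqW unfolding Nu[symmetric] n1 cJ m m'
    by (simp add: algebra_simps power2_eq_square ap')
  hence "int p ^ 2 dvd a * n1 - a ^ p"
    using DIVINT[of "of_int (a ^ (p - 1) * m') + W" "a * n1 - a ^ p" "int p ^ 2"] W p_pos by auto
  moreover have "a * n1 - a ^ p = a * (n1 - a ^ (p - 1))"
    using p_pos by (simp add: algebra_simps power_eq_if)
  ultimately have d1: "int p ^ 2 dvd a * (n1 - a ^ (p - 1))" by simp
  have na: "\<not> int p dvd a"
  proof
    assume "int p dvd a"
    hence "lc (p - 1) (of_int a) 0" by (rule dvd_lc)
    hence la: "lc 1 (of_int a) 0" using p_ge3 lc_mono[of "p - 1" "of_int a" 0 1] by simp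
    have "lc 1 u (of_int a)" unfolding lc_def using us s
      by (intro bexI[of _ "of_nat p * l * s"]) (auto simp: power2_eq_square mult_ac)
    hence "lc 1 u 0" using la lc_trans by blast
    thus False using not_unit_l[OF u u' uu'] by simp
  qed
  have pp: "prime (int p)" using pr by simp
  have "coprime (int p ^ 2) a" using na pp
    by (simp add: prime_imp_coprime)
  hence d2: "int p ^ 2 dvd n1 - a ^ (p - 1)" using d1 by (simp add: coprime_dvd_mult_right_iff)
  have "n1 = 1"
  proof (rule ccontr)
    assume "n1 \<noteq> 1"
    hence "n1 = -1" using n1pm by simp
    moreover have "int p dvd int p ^ 2" by (simp add: power2_eq_square)
    ultimately have "int p dvd -1 - a ^ (p - 1)" using d2 dvd_trans by (metis)
    moreover have "int p dvd a ^ (p - 1) - 1" using fermat_int[OF pr na] .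
    ultimately have "int p dvd (-1 - a ^ (p - 1)) + (a ^ (p - 1) - 1)" by (rule dvd_add)
    hence "int p dvd - 2" by simp
    hence "int p dvd 2" by (simp only: dvd_minus_iff)
    hence "p dvd 2" by (metis of_nat_dvd_iff of_nat_numeral)
    thus False using p_ge3 by (auto dest: dvd_imp_le)
  qed
  thus ?thesis using d2 by (simp add: dvd_diff_commute)
qed

end

context cyc
begin

lemma l_pow_split: "a \<le> b \<Longrightarrow> l ^ b = l ^ a * l ^ (b - a)"
  by (simp add: power_add[symmetric])

lemma lc_intro: "w \<in> ZZ \<Longrightarrow> x = l ^ k * w \<Longrightarrow> lc k x 0"
  unfolding lc_def by (intro bexI[of _ w]) simp_all

lemma lc_sum0: "(\<And>i. i \<in> A \<Longrightarrow> lc k (f i) 0) \<Longrightarrow> lc k (sum f A) 0"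
proof (induction A rule: infinite_finite_induct)
  case (insert x A)
  hence "lc k (f x + sum f A) (0 + 0)" by (intro lc_add) auto
  thus ?case using insert by simp
qed auto

lemma BIN:
  assumes m: "m \<ge> 2"
  shows "lc (m + p) ((1 + of_int t * l ^ m) ^ p) (1 + of_int t * e * l ^ (m + p - 1))"
proof -
  define X where "X = of_int t * l ^ m"
  define f where "f k = of_nat (p choose k) * X ^ k" for k
  have "(1 + X) ^ p = (X + 1) ^ p" by (simp add: add.commute)
  also have "\<dots> = (\<Sum>k\<le>p. f k)" by (simp add: binomial_ring f_def)
  also have "{..p} = insert 0 (insert 1 {2..p})" using p_ge3 by auto
  hence "(\<Sum>k\<le>p. f k) = f 0 + f 1 + (\<Sum>k\<in>{2..p}. f k)" by simp
  finally have eq: "(1 + X) ^ p = f 0 + f 1 + (\<Sum>k\<in>{2..p}. f k)" .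
  have f0: "f 0 = 1" by (simp add: f_def)
  have f1: "f 1 = of_int t * e * l ^ (m + p - 1)"
  proof -
    have "f 1 = of_nat p * X" by (simp add: f_def)
    also have "\<dots> = l ^ (p - 1) * e * (of_int t * l ^ m)" by (simp add: p_eq X_def)
    also have "l ^ (p - 1) * e * (of_int t * l ^ m) = of_int t * e * (l ^ (p - 1) * l ^ m)" by (simp add: mult_ac)
    also have "l ^ (p - 1) * l ^ m = l ^ (m + p - 1)"
    proof -
      have "p - 1 + m = m + p - 1" using p_pos by simp
      thus ?thesis by (simp only: power_add[symmetric])
    qed
    finally show ?thesis .
  qed
  have fk: "lc (m + p) (f k) 0" if k: "k \<in> {2..p}" for k
  proof (cases "k = p")
    case True
    have "m * p \<ge> m + p"
    proof -
      have "(m - 1) * (p - 1) \<ge> 1 * 2" using m p_ge3 by (intro mult_mono) auto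
      hence "m * p - m - p + 1 \<ge> 2" by (simp add: algebra_simps diff_mult_distrib diff_mult_distrib2)
      thus ?thesis by linarith
    qed
    have "f k = of_int t ^ p * l ^ (m * p)" using True by (simp add: f_def X_def power_mult_distrib power_mult)
    also have "l ^ (m * p) = l ^ (m + p) * l ^ (m * p - (m + p))" by (rule l_pow_split) fact
    finally have "f k = l ^ (m + p) * (of_int t ^ p * l ^ (m * p - (m + p)))" by (simp only: mult_ac)
    thus ?thesis unfolding lc_def by auto
  next
    case False
    hence kp: "k < p" "k \<ge> 2" using k by auto
    hence "p dvd (p choose k)" using dvd_choose_prime pr by auto
    then obtain c where c: "p choose k = p * c" by (elim dvdE)
    have "m * k \<ge> m * 2" using kp by simp
    hence mk: "m * k \<ge> m + 1" using m by linarith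
    have "f k = of_nat p * of_nat c * (of_int t ^ k * l ^ (m * k))"
      by (simp add: f_def X_def c power_mult_distrib power_mult)
    also have "\<dots> = l ^ (p - 1) * l ^ (m * k) * (e * of_nat c * of_int t ^ k)" by (simp add: p_eq mult_ac)
    also have "l ^ (p - 1) * l ^ (m * k) = l ^ (m + p) * l ^ (m * k - m - 1)"
    proof -
      have "(p - 1) + m * k = (m + p) + (m * k - m - 1)" using mk p_pos by simp
      thus ?thesis by (simp only: power_add[symmetric])
    qed
    finally have "f k = l ^ (m + p) * (l ^ (m * k - m - 1) * (e * of_nat c * of_int t ^ k))" by (simp add: mult_ac)
    moreover have "l ^ (m * k - m - 1) * (e * of_nat c * of_int t ^ k) \<in> ZZ" by (intro ZZ_mult ZZ_power) auto
    ultimately show ?thesis by (intro lc_intro)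
  qed
  have "lc (m + p) (\<Sum>k\<in>{2..p}. f k) 0" by (rule lc_sum0) (rule fk)
  hence "lc (m + p) (f 0 + f 1 + (\<Sum>k\<in>{2..p}. f k)) (f 0 + f 1 + 0)" by (intro lc_add) auto
  thus ?thesis using eq f0 f1 by (simp add: X_def)
qed

end

context cyc
begin

lemma lc1_int_ndvd:
  assumes x: "x \<in> ZZ" "x' \<in> ZZ" "x * x' = 1" and c: "lc 1 x (of_int c)"
  shows "\<not> int p dvd c"
proof
  assume "int p dvd c"
  hence "lc (p - 1) (of_int c) 0" by (rule dvd_lc)
  hence "lc 1 (of_int c) 0" using p_ge3 lc_mono[of "p - 1" "of_int c" 0 1] by simp
  hence "lc 1 x 0" using c lc_trans by blast
  thus False using not_unit_l[OF x] by simp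
qed

lemma hensel_step:
  assumes k: "k \<ge> p + 1" and y: "y \<in> ZZ" and u: "u \<in> ZZ" and u': "u' \<in> ZZ" and uu': "u * u' = 1"
    and cong: "lc k u (y ^ p)"
  shows "\<exists>y'\<in>ZZ. lc (k + 1) u (y' ^ p) \<and> lc (k - p + 1) y' y"
proof -
  define m where "m = k - p + 1"
  have m2: "m \<ge> 2" using k by (simp add: m_def)
  have mp: "m + p = k + 1" "m + p - 1 = k" using k by (auto simp: m_def)
  obtain r where r: "r \<in> ZZ" "u - y ^ p = l ^ k * r" using cong unfolding lc_def by auto
  obtain r0 where r0: "lc 1 r (of_int r0)" using lc_int[OF r(1)] by blast
  obtain y0 where y0: "lc 1 y (of_int y0)" using lc_int[OF y] by blast
  obtain e0 where e0: "lc 1 e (of_int e0)" using lc_int[OF e_in] by blast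
  have ny0: "\<not> int p dvd y0"
  proof
    assume "int p dvd y0"
    hence "lc (p - 1) (of_int y0) 0" by (rule dvd_lc)
    hence "lc 1 (of_int y0) 0" using p_ge3 lc_mono[of "p - 1" "of_int y0" 0 1] by simp
    hence "lc 1 y 0" using y0 lc_trans by blast
    hence "lc 1 (y ^ p) (0 ^ p)" using y by (intro lc_pow) auto
    hence "lc 1 (y ^ p) 0" using p_pos by (simp add: zero_power)
    moreover have "lc 1 u (y ^ p)" using cong k lc_mono[of k u "y ^ p" 1] by simp
    ultimately have "lc 1 u 0" using lc_trans by blast
    thus False using not_unit_l[OF u u' uu'] by simp
  qed
  have ne0: "\<not> int p dvd e0" by (rule lc1_int_ndvd[OF e_in e'_in ee' e0])
  have pp: "prime (int p)" using pr by simp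
  have "\<not> int p dvd y0 ^ p" using ny0 pp prime_dvd_power by blast
  hence "\<not> int p dvd y0 ^ p * e0" using ne0 pp by (simp add: prime_dvd_mult_iff)
  hence "coprime (int p) (y0 ^ p * e0)" using pp prime_imp_coprime by blast
  hence "coprime (y0 ^ p * e0) (int p)" by (simp only: coprime_commute)
  then obtain iv where iv: "[(y0 ^ p * e0) * iv = 1] (mod int p)" using cong_solve_coprime_int by blast
  define t where "t = r0 * iv"
  have "int p dvd (y0 ^ p * e0) * iv - 1" using iv by (simp add: cong_iff_dvd_diff)
  hence "int p dvd r0 * ((y0 ^ p * e0) * iv - 1)" by simp
  moreover have "r0 - y0 ^ p * e0 * t = - (r0 * ((y0 ^ p * e0) * iv - 1))" unfolding t_def by (simp add: algebra_simps)
  ultimately have dv: "int p dvd r0 - y0 ^ p * e0 * t" by (simp only: dvd_minus_iff)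
  define y' where "y' = y * (1 + of_int t * l ^ m)"
  have y'Z: "y' \<in> ZZ" unfolding y'_def using y by (intro ZZ_mult ZZ_add ZZ_power) auto
  have bin: "lc (k + 1) ((1 + of_int t * l ^ m) ^ p) (1 + of_int t * e * l ^ k)"
    using BIN[OF m2, of t] mp by simp
  have 1: "lc (k + 1) (y' ^ p) (y ^ p * (1 + of_int t * e * l ^ k))"
  proof -
    have "lc (k + 1) (y ^ p * (1 + of_int t * l ^ m) ^ p) (y ^ p * (1 + of_int t * e * l ^ k))"
      using y by (intro lc_mult[OF lc_refl bin]) auto
    thus ?thesis by (simp add: y'_def power_mult_distrib)
  qed
  have "lc 1 (r - y ^ p * e * of_int t) (of_int r0 - of_int y0 ^ p * of_int e0 * of_int t)"
  proof (rule lc_diff[OF r0])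
    have "lc 1 (y ^ p) (of_int y0 ^ p)" using y0 y by (intro lc_pow) auto
    hence "lc 1 (y ^ p * e) (of_int y0 ^ p * of_int e0)" using y by (intro lc_mult[OF _ e0]) auto
    thus "lc 1 (y ^ p * e * of_int t) (of_int y0 ^ p * of_int e0 * of_int t)" using y by (intro lc_mult[OF _ lc_refl]) auto
  qed
  moreover have "lc 1 (of_int (r0 - y0 ^ p * e0 * t)) 0"
    using dvd_lc[OF dv] p_ge3 lc_mono[of "p - 1" _ 0 1] by simp
  ultimately have "lc 1 (r - y ^ p * e * of_int t) 0" using lc_trans by simp
  then obtain q where q: "q \<in> ZZ" "r - y ^ p * e * of_int t = l * q" unfolding lc_def by auto
  have "u - y ^ p * (1 + of_int t * e * l ^ k) = l ^ k * (r - y ^ p * e * of_int t)"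
    using r(2) by (simp add: algebra_simps)
  also have "\<dots> = l ^ (k + 1) * q" using q(2) by (simp add: mult_ac)
  finally have "lc (k + 1) u (y ^ p * (1 + of_int t * e * l ^ k))" unfolding lc_def using q(1) by blast
  hence A: "lc (k + 1) u (y' ^ p)" using 1 lc_sym lc_trans by blast
  have "y' - y = l ^ m * (y * of_int t)" by (simp add: y'_def algebra_simps)
  hence B: "lc m y' y" unfolding lc_def using y by auto
  show ?thesis using A B y'Z by (auto simp: m_def)
qed

end

context cyc
begin

lemma p2_lc: assumes "int p ^ 2 dvd n" shows "lc (p + 1) (of_int n) 0"
proof -
  obtain c where c: "n = int p ^ 2 * c" using assms by (elim dvdE)
  have "of_int n = (l ^ (p - 1) * e) ^ 2 * of_int c" using c p_eq by simp
  also have "\<dots> = (l ^ (p - 1)) ^ 2 * (e ^ 2 * of_int c)"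
    by (simp add: power_mult_distrib mult_ac)
  also have "(l ^ (p - 1)) ^ 2 = l ^ (2 * (p - 1))" by (simp only: mult.commute[of 2] power_mult)
  finally have "lc (2 * (p - 1)) (of_int n) 0" by (intro lc_intro[of "e ^ 2 * of_int c"]) auto
  thus ?thesis using p_ge3 lc_mono[of "2 * (p - 1)" "of_int n" 0 "p + 1"] by simp
qed

lemma main:
  assumes u: "u \<in> ZZ" and u': "u' \<in> ZZ" and uu': "u * u' = 1"
    and w: "w \<in> ZZ" and uw: "u - of_int a = of_nat p * w"
  shows "\<exists>W. o_elem p W \<and> o_unit p W \<and> o_eq p (\<lambda>n. W n ^ p) (\<lambda>n. u)"
proof -
  have cu: "cnj u = u" by (rule real_unit[OF u u' uu' w uw])
  obtain a' s where s: "s \<in> ZZ" and us: "u - of_int a' = of_nat p * l ^ 2 * s"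
    using lc_l2[OF u cu w uw] by blast
  have d: "int p ^ 2 dvd a' ^ (p - 1) - 1" by (rule norm_cong[OF u u' uu' s us])
  have st1: "lc (p + 1) u (of_int a')"
  proof -
    have "u - of_int a' = l ^ (p + 1) * (e * s)"
    proof -
      have "u - of_int a' = l ^ (p - 1) * l ^ 2 * (e * s)" using us p_eq by (simp add: mult_ac)
      also have "l ^ (p - 1) * l ^ 2 = l ^ (p + 1)"
      proof -
        have "p - 1 + 2 = p + 1" using p_pos by simp
        thus ?thesis by (simp only: power_add[symmetric])
      qed
      finally show ?thesis .
    qed
    thus ?thesis unfolding lc_def using s by auto
  qed
  have "a' ^ p - a' = a' * (a' ^ (p - 1) - 1)"
    using p_pos by (simp add: algebra_simps power_eq_if)
  hence "int p ^ 2 dvd a' ^ p - a'" using d by simp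
  hence "lc (p + 1) (of_int (a' ^ p - a')) 0" by (rule p2_lc)
  hence st2: "lc (p + 1) (of_int a' ^ p) (of_int a')" unfolding lc_def by simp
  have start: "lc (p + 1) u (of_int a' ^ p)" using st1 st2 lc_sym lc_trans by blast
  define P where "P n y \<longleftrightarrow> y \<in> ZZ \<and> lc (p + 1 + n) u (y ^ p)" for n y
  define step where "step n y = (SOME y'. y' \<in> ZZ \<and> lc (p + 1 + Suc n) u (y' ^ p) \<and> lc (n + 2) y' y)" for n y
  define Y where "Y = rec_nat (of_int a') step"
  have Y0: "Y 0 = of_int a'" by (simp add: Y_def)
  have YS: "Y (Suc n) = step n (Y n)" for n by (simp add: Y_def)
  have stepP: "P (Suc n) (step n y) \<and> lc (n + 2) (step n y) y" if "P n y" for n y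
  proof -
    have "\<exists>y'\<in>ZZ. lc (p + 1 + n + 1) u (y' ^ p) \<and> lc (p + 1 + n - p + 1) y' y"
      using that unfolding P_def by (intro hensel_step[OF _ _ u u' uu']) auto
    hence ex: "\<exists>y'. y' \<in> ZZ \<and> lc (p + 1 + Suc n) u (y' ^ p) \<and> lc (n + 2) y' y" by auto
    from someI_ex[OF ex] show ?thesis unfolding P_def step_def by auto
  qed
  have PY: "P n (Y n)" for n
  proof (induction n)
    case 0 show ?case unfolding P_def Y0 using start by simp
  next
    case (Suc n) thus ?case using stepP YS by simp
  qed
  have YY: "lc (n + 2) (Y (Suc n)) (Y n)" for n using stepP[OF PY[of n]] YS by simp
  have tele: "lc (n + 2) (Y (n + d)) (Y n)" for n d
  proof (induction d)
    case 0 show ?case by simp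
  next
    case (Suc d)
    have "lc (n + d + 2) (Y (Suc (n + d))) (Y (n + d))" by (rule YY)
    hence "lc (n + 2) (Y (Suc (n + d))) (Y (n + d))" by (rule lc_mono) simp
    thus ?case using Suc lc_trans by simp
  qed
  have YZ: "Y n \<in> ZZ" for n using PY[of n] unfolding P_def by simp
  define W where "W n = Y (n * (p - 1))" for n
  have WZ: "W n \<in> ZZ" for n unfolding W_def by (rule YZ)
  have Wc: "lc (n * (p - 1)) (W (Suc n)) (W n)" for n
  proof -
    have "lc (n * (p - 1) + 2) (Y (n * (p - 1) + (p - 1))) (Y (n * (p - 1)))" by (rule tele)
    hence "lc (n * (p - 1)) (Y (n * (p - 1) + (p - 1))) (Y (n * (p - 1)))" by (rule lc_mono) simp
    thus ?thesis unfolding W_def by (simp add: add.commute)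
  qed
  have Wp: "lc (n * (p - 1)) (W n ^ p) u" for n
  proof -
    have "lc (p + 1 + n * (p - 1)) u (W n ^ p)" using PY[of "n * (p - 1)"] unfolding P_def W_def by simp
    hence "lc (n * (p - 1)) u (W n ^ p)" by (rule lc_mono) simp
    thus ?thesis by (rule lc_sym)
  qed
  define V where "V n = W n ^ (p - 1) * u'" for n
  have VZ: "V n \<in> ZZ" for n unfolding V_def using WZ u' by auto
  have oW: "o_elem p W" unfolding o_elem_def using WZ Wc pn_lc by blast
  have oV: "o_elem p V" unfolding o_elem_def
  proof (intro conjI allI)
    fix n show "V n \<in> Zz p" by (rule VZ)
    have "lc (n * (p - 1)) (W (Suc n) ^ (p - 1)) (W n ^ (p - 1))" using Wc WZ by (intro lc_pow) auto
    hence "lc (n * (p - 1)) (W (Suc n) ^ (p - 1) * u') (W n ^ (p - 1) * u')"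
      using WZ u' by (intro lc_mult[OF _ lc_refl]) auto
    thus "congZ p (int p ^ n) (V (Suc n)) (V n)" unfolding V_def by (rule pn_lc)
  qed
  have WV: "o_eq p (\<lambda>n. W n * V n) (\<lambda>n. 1)" unfolding o_eq_def
  proof
    fix n
    have "W n * V n = W n ^ p * u'" unfolding V_def
      using power_Suc[of "W n" "p - 1"] Suc_diff_1[OF p_pos] by (simp add: mult.assoc)
    moreover have "lc (n * (p - 1)) (W n ^ p * u') (u * u')" using Wp WZ u' by (intro lc_mult[OF _ lc_refl]) auto
    ultimately have "lc (n * (p - 1)) (W n * V n) 1" using uu' by simp
    thus "congZ p (int p ^ n) (W n * V n) 1" by (rule pn_lc)
  qed
  have oU: "o_unit p W" unfolding o_unit_def using oV WV by blast
  have oE: "o_eq p (\<lambda>n. W n ^ p) (\<lambda>n. u)" unfolding o_eq_def using Wp pn_lc by blast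
  show ?thesis using oW oU oE by blast
qed

end

theorem proposition3:
  fixes p :: nat and u :: complex
  assumes "prime p" and "odd p"
    and "global_unit p u"
    and "\<exists>a. Zp_elem p a \<and> Zp_unit p a \<and>
           (\<exists>w. o_elem p w \<and> o_eq p (\<lambda>n. u - of_int (a n)) (\<lambda>n. of_nat p * w n))"
  shows "\<exists>w. o_elem p w \<and> o_unit p w \<and> o_eq p (\<lambda>n. w n ^ p) (\<lambda>n. u)"
proof -
  interpret cyc p using assms(1,2) by unfold_locales
  obtain u' where u: "u \<in> Zz p" and u': "u' \<in> Zz p" and uu': "u * u' = 1"
    using assms(3) unfolding global_unit_def by blast
  obtain a w0 where w0: "o_elem p w0" and eq: "o_eq p (\<lambda>n. u - of_int (a n)) (\<lambda>n. of_nat p * w0 n)"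
    using assms(4) by blast
  have "congZ p (int p ^ 1) (u - of_int (a 1)) (of_nat p * w0 1)"
    using eq unfolding o_eq_def by blast
  then obtain W where W: "W \<in> Zz p" and "u - of_int (a 1) - of_nat p * w0 1 = of_int (int p) * W"
    unfolding congZ_def by auto
  hence "u - of_int (a 1) = of_nat p * (w0 1 + W)" by (simp add: algebra_simps)
  moreover have "w0 1 + W \<in> Zz p" using w0 W unfolding o_elem_def by auto
  ultimately show ?thesis using main[OF u u' uu'] by blast
qed


end
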